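(* Let $T$ be the modular tree of a finite graph $X$, let $N$ be the root node of $T$, and let $T_1,\dots,T_k$ be the subtrees of the children of $N$ (attached to the marker vertices of $N$). Color the marker vertices of $N$ so that two of them get the same color iff their attached subtrees are isomorphic. Then $${\rm Aut}(T)\cong\bigl({\rm Aut}(T_1)\times\cdots\times{\rm Aut}(T_k)\bigr)\rtimes{\rm Aut}(N),$$ where ${\rm Aut}(N)$ denotes the group of color-preserving automorphisms of $N$ (acting by permuting the factors corresponding to isomorphic subtrees).
   Context: A module of a graph $X$ is a set $M\subseteq V(X)$ such that every $x\in V(X)\setminus M$ is adjacent either to all vertices of $M$ or to none. A module is trivial if it equals $V(X)$ or has size $1$; a graph is prime if all its modules are trivial, and degenerate if it is $K_n$ or $\overline{K_n}$. Two disjoint modules are adjacent if all edges between them are present. For a modular partition $\mathcal P=\{M_1,\dots,M_k\}$ of $V(X)$, the quotient $X/\mathcal P$ has vertices $m_1,\dots,m_k$ with $m_im_j$ an edge iff $M_i,M_j$ are adjacent. Modular decomposition: if $X$ is prime or degenerate, stop; if $X$ and $\overline X$ are connected, use the partition into inclusion-maximal proper modules; if $X$ is disconnected (and $\overline X$ connected), use the connected components of $X$; if $\overline X$ is disconnected (and $X$ connected), use the connected components of $\overline X$; recurse on each part. The modular tree $T$ (with normal and marker vertices, normal edges and directed tree edges, and a root node) is defined recursively: if $X$ is prime or degenerate, $T=X$ is its own root node. Otherwise, with $\mathcal P=\{M_1,\dots,M_k\}$ the partition used and $T_i$ the modular tree of $X[M_i]$, $T$ is the disjoint union of the $T_i$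 and of the quotient $X/\mathcal P$ (the root node, with marker vertices $m_1,\dots,m_k$); to each $T_i$ a new marker vertex $m_i'$ adjacent exactly to the root node of $T_i$ is added, together with a tree edge oriented from $m_i$ to $m_i'$. The subtree $T_i$ is the modular tree whose root node is the node of $X[M_i]$. Automorphisms of modular trees must preserve vertex types, edge types and orientations of tree edges. *)

theory Defs
  imports "HOL-Algebra.Group" "HOL-Library.FuncSet"
begin

text \<open>A graph X is given by a vertex set V and an adjacency relation E
  (only its values on V matter).\<close>

definition fin_graph :: "'a set \<Rightarrow> ('a \<Rightarrow> 'a \<Rightarrow> bool) \<Rightarrow> bool" where
  "fin_graph V E \<longleftrightarrow> finite V \<and> (\<forall>x\<in>V. \<forall>y\<in>V. E x y \<longleftrightarrow> E y x) \<and> (\<forall>x\<in>V. \<not> E x x)"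

definition is_module :: "('a \<Rightarrow> 'a \<Rightarrow> bool) \<Rightarrow> 'a set \<Rightarrow> 'a set \<Rightarrow> bool" where
  "is_module E S M \<longleftrightarrow> M \<subseteq> S \<and> M \<noteq> {} \<and>
     (\<forall>x\<in>S - M. (\<forall>y\<in>M. E x y) \<or> (\<forall>y\<in>M. \<not> E x y))"

definition is_prime :: "('a \<Rightarrow> 'a \<Rightarrow> bool) \<Rightarrow> 'a set \<Rightarrow> bool" where
  "is_prime E S \<longleftrightarrow> (\<forall>M. is_module E S M \<longrightarrow> M = S \<or> card M = 1)"

definition is_degenerate :: "('a \<Rightarrow> 'a \<Rightarrow> bool) \<Rightarrow> 'a set \<Rightarrow> bool" where
  "is_degenerate E S \<longleftrightarrow> (\<forall>x\<in>S. \<forall>y\<in>S. x \<noteq> y \<longrightarrow> E x y) \<or> (\<forall>x\<in>S. \<forall>y\<in>S. \<not> E x y)"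

definition is_leaf :: "('a \<Rightarrow> 'a \<Rightarrow> bool) \<Rightarrow> 'a set \<Rightarrow> bool" where
  "is_leaf E S \<longleftrightarrow> is_prime E S \<or> is_degenerate E S"

definition co_adj :: "('a \<Rightarrow> 'a \<Rightarrow> bool) \<Rightarrow> 'a \<Rightarrow> 'a \<Rightarrow> bool" where
  "co_adj E x y \<longleftrightarrow> x \<noteq> y \<and> \<not> E x y"

definition restr_rel :: "('a \<Rightarrow> 'a \<Rightarrow> bool) \<Rightarrow> 'a set \<Rightarrow> 'a \<Rightarrow> 'a \<Rightarrow> bool" where
  "restr_rel R S x y \<longleftrightarrow> x \<in> S \<and> y \<in> S \<and> R x y"

definition is_connected :: "('a \<Rightarrow> 'a \<Rightarrow> bool) \<Rightarrow> 'a set \<Rightarrow> bool" where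
  "is_connected R S \<longleftrightarrow> (\<forall>x\<in>S. \<forall>y\<in>S. (restr_rel R S)\<^sup>*\<^sup>* x y)"

definition components :: "('a \<Rightarrow> 'a \<Rightarrow> bool) \<Rightarrow> 'a set \<Rightarrow> 'a set set" where
  "components R S = {{y \<in> S. (restr_rel R S)\<^sup>*\<^sup>* x y} | x. x \<in> S}"

definition max_proper_modules :: "('a \<Rightarrow> 'a \<Rightarrow> bool) \<Rightarrow> 'a set \<Rightarrow> 'a set set" where
  "max_proper_modules E S = {M. is_module E S M \<and> M \<noteq> S \<and>
     (\<forall>M'. is_module E S M' \<and> M' \<noteq> S \<and> M \<subseteq> M' \<longrightarrow> M' = M)}"

definition mpart :: "('a \<Rightarrow> 'a \<Rightarrow> bool) \<Rightarrow> 'a set \<Rightarrow> 'a set set" where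
  "mpart E S =
     (if is_connected E S \<and> is_connected (co_adj E) S then max_proper_modules E S
      else if \<not> is_connected E S then components E S
      else components (co_adj E) S)"

text \<open>The sets (modules) occurring as nodes of the modular decomposition of X = (V,E).\<close>
inductive_set dsets :: "'a set \<Rightarrow> ('a \<Rightarrow> 'a \<Rightarrow> bool) \<Rightarrow> 'a set set"
  for V :: "'a set" and E :: "'a \<Rightarrow> 'a \<Rightarrow> bool" where
  root: "V \<in> dsets V E"
| child: "S \<in> dsets V E \<Longrightarrow> \<not> is_leaf E S \<Longrightarrow> M \<in> mpart E S \<Longrightarrow> M \<in> dsets V E"

definition mod_adjacent :: "('a \<Rightarrow> 'a \<Rightarrow> bool) \<Rightarrow> 'a set \<Rightarrow> 'a set \<Rightarrow> bool" where
  "mod_adjacent E M M' \<longleftrightarrow> (\<forall>x\<in>M. \<forall>y\<in>M'. E x y)"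

text \<open>A modular tree: vertices, normal vertices (the others are marker vertices),
  normal (undirected, stored symmetrically) edges and directed tree edges.\<close>
record 'v mtree =
  mverts :: "'v set"
  mnormal :: "'v set"
  mnedges :: "('v \<times> 'v) set"
  mtedges :: "('v \<times> 'v) set"

text \<open>Vertex names: normal vertex x is Inl x; the marker m in the parent node
  representing the child module M is Inr (M, False); the added marker m' in the
  node of M is Inr (M, True).\<close>
type_synonym 'a mvert = "'a + ('a set \<times> bool)"

definition node_verts :: "'a set \<Rightarrow> ('a \<Rightarrow> 'a \<Rightarrow> bool) \<Rightarrow> 'a set \<Rightarrow> 'a mvert set" where
  "node_verts V E S =
     (if is_leaf E S then Inl ` S else (\<lambda>M. Inr (M, False)) ` mpart E S)
     \<union> (if S = V then {} else {Inr (S, True)})"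

definition node_edges :: "'a set \<Rightarrow> ('a \<Rightarrow> 'a \<Rightarrow> bool) \<Rightarrow> 'a set \<Rightarrow> ('a mvert \<times> 'a mvert) set" where
  "node_edges V E S =
     (if is_leaf E S then {(Inl x, Inl y) | x y. x \<in> S \<and> y \<in> S \<and> E x y}
      else {(Inr (M, False), Inr (M', False)) | M M'.
              M \<in> mpart E S \<and> M' \<in> mpart E S \<and> M \<noteq> M' \<and> mod_adjacent E M M'})
     \<union> (if S = V then {} else
          {(Inr (S, True), w) | w. w \<in> node_verts V E S - {Inr (S, True)}}
          \<union> {(w, Inr (S, True)) | w. w \<in> node_verts V E S - {Inr (S, True)}})"

definition modtree :: "'a set \<Rightarrow> ('a \<Rightarrow> 'a \<Rightarrow> bool) \<Rightarrow> 'a mvert mtree" where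
  "modtree V E =
     \<lparr> mverts = (\<Union>S\<in>dsets V E. node_verts V E S),
       mnormal = Inl ` V,
       mnedges = (\<Union>S\<in>dsets V E. node_edges V E S),
       mtedges = {(Inr (M, False), Inr (M, True)) | M. M \<in> dsets V E \<and> M \<noteq> V} \<rparr>"

definition root_node :: "'a set \<Rightarrow> ('a \<Rightarrow> 'a \<Rightarrow> bool) \<Rightarrow> 'a mvert set" where
  "root_node V E = node_verts V E V"

definition root_markers :: "'a set \<Rightarrow> ('a \<Rightarrow> 'a \<Rightarrow> bool) \<Rightarrow> 'a mvert set" where
  "root_markers V E = root_node V E - mnormal (modtree V E)"

definition marker_set :: "'a mvert \<Rightarrow> 'a set" where
  "marker_set v = (case v of Inl _ \<Rightarrow> {} | Inr (M, _) \<Rightarrow> M)"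

definition subtree :: "('a \<Rightarrow> 'a \<Rightarrow> bool) \<Rightarrow> 'a mvert \<Rightarrow> 'a mvert mtree" where
  "subtree E v = modtree (marker_set v) E"

definition mt_isom :: "'v mtree \<Rightarrow> 'w mtree \<Rightarrow> ('v \<Rightarrow> 'w) \<Rightarrow> bool" where
  "mt_isom T T' f \<longleftrightarrow> bij_betw f (mverts T) (mverts T') \<and>
     (\<forall>x\<in>mverts T. x \<in> mnormal T \<longleftrightarrow> f x \<in> mnormal T') \<and>
     (\<forall>x\<in>mverts T. \<forall>y\<in>mverts T.
        ((x, y) \<in> mnedges T \<longleftrightarrow> (f x, f y) \<in> mnedges T') \<and>
        ((x, y) \<in> mtedges T \<longleftrightarrow> (f x, f y) \<in> mtedges T'))"

definition mt_isomorphic :: "'v mtree \<Rightarrow> 'w mtree \<Rightarrow> bool" where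
  "mt_isomorphic T T' \<longleftrightarrow> (\<exists>f. mt_isom T T' f)"

definition aut_group :: "'v mtree \<Rightarrow> ('v \<Rightarrow> 'v) monoid" where
  "aut_group T =
     \<lparr> carrier = {f. f \<in> extensional (mverts T) \<and> mt_isom T T f},
       mult = (\<lambda>f g. compose (mverts T) f g),
       one = restrict id (mverts T) \<rparr>"

text \<open>Colour-preserving automorphisms of the root node N: automorphisms of the
  node graph (preserving vertex types) such that each marker vertex is mapped to a
  marker vertex whose attached subtree is isomorphic (same colour).\<close>
definition aut_root_node :: "'a set \<Rightarrow> ('a \<Rightarrow> 'a \<Rightarrow> bool) \<Rightarrow> ('a mvert \<Rightarrow> 'a mvert) set" where
  "aut_root_node V E =
     {p. p \<in> extensional (root_node V E) \<and> bij_betw p (root_node V E) (root_node V E) \<and>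
         (\<forall>x\<in>root_node V E. x \<in> mnormal (modtree V E) \<longleftrightarrow> p x \<in> mnormal (modtree V E)) \<and>
         (\<forall>x\<in>root_node V E. \<forall>y\<in>root_node V E.
            (x, y) \<in> mnedges (modtree V E) \<longleftrightarrow> (p x, p y) \<in> mnedges (modtree V E)) \<and>
         (\<forall>v\<in>root_markers V E. mt_isomorphic (subtree E v) (subtree E (p v)))}"

text \<open>To let Aut(N) act by permuting isomorphic factors, isomorphic subtrees are
  identified coherently: each colour class gets a representative, and every
  subtree is identified with its representative by a fixed isomorphism.\<close>

definition rep_marker :: "'a set \<Rightarrow> ('a \<Rightarrow> 'a \<Rightarrow> bool) \<Rightarrow> 'a mvert \<Rightarrow> 'a mvert" where
  "rep_marker V E v = (SOME w. w \<in> root_markers V E \<and> mt_isomorphic (subtree E v) (subtree E w))"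

definition rep_iso :: "'a set \<Rightarrow> ('a \<Rightarrow> 'a \<Rightarrow> bool) \<Rightarrow> 'a mvert \<Rightarrow> 'a mvert \<Rightarrow> 'a mvert" where
  "rep_iso V E v = (SOME f. f \<in> extensional (mverts (subtree E v)) \<and>
                     mt_isom (subtree E v) (subtree E (rep_marker V E v)) f)"

definition rep_iso_inv :: "'a set \<Rightarrow> ('a \<Rightarrow> 'a \<Rightarrow> bool) \<Rightarrow> 'a mvert \<Rightarrow> 'a mvert \<Rightarrow> 'a mvert" where
  "rep_iso_inv V E v = restrict (inv_into (mverts (subtree E v)) (rep_iso V E v))
                          (mverts (subtree E (rep_marker V E v)))"

definition transport :: "'a set \<Rightarrow> ('a \<Rightarrow> 'a \<Rightarrow> bool) \<Rightarrow> 'a mvert \<Rightarrow> 'a mvert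
      \<Rightarrow> ('a mvert \<Rightarrow> 'a mvert) \<Rightarrow> ('a mvert \<Rightarrow> 'a mvert)" where
  "transport V E u w f = restrict
     (rep_iso_inv V E w \<circ> rep_iso V E u \<circ> f \<circ> rep_iso_inv V E u \<circ> rep_iso V E w)
     (mverts (subtree E w))"

text \<open>Action of p in Aut(N) on a tuple (a_v) of automorphisms of the subtrees:
  the v-th component is moved to position p v.\<close>
definition root_action :: "'a set \<Rightarrow> ('a \<Rightarrow> 'a \<Rightarrow> bool) \<Rightarrow> ('a mvert \<Rightarrow> 'a mvert)
      \<Rightarrow> ('a mvert \<Rightarrow> 'a mvert \<Rightarrow> 'a mvert) \<Rightarrow> ('a mvert \<Rightarrow> 'a mvert \<Rightarrow> 'a mvert)" where
  "root_action V E p a =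
     (\<lambda>w\<in>root_markers V E.
        let u = inv_into (root_node V E) p w in transport V E u w (a u))"

definition semidirect_aut :: "'a set \<Rightarrow> ('a \<Rightarrow> 'a \<Rightarrow> bool)
      \<Rightarrow> (('a mvert \<Rightarrow> 'a mvert \<Rightarrow> 'a mvert) \<times> ('a mvert \<Rightarrow> 'a mvert)) monoid" where
  "semidirect_aut V E =
     \<lparr> carrier = (\<Pi>\<^sub>E v\<in>root_markers V E. carrier (aut_group (subtree E v)))
                  \<times> aut_root_node V E,
       mult = (\<lambda>(a, p) (b, q).
                 ((\<lambda>v\<in>root_markers V E. a v \<otimes>\<^bsub>aut_group (subtree E v)\<^esub> root_action V E p b v),
                  compose (root_node V E) p q)),
       one = ((\<lambda>v\<in>root_markers V E. \<one>\<^bsub>aut_group (subtree E v)\<^esub>),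
              restrict id (root_node V E)) \<rparr>"

end

theory Submission
  imports Defs
begin


lemma fin_graph_subset: "fin_graph V E \<Longrightarrow> S \<subseteq> V \<Longrightarrow> fin_graph S E"
  unfolding fin_graph_def by (auto intro: finite_subset)

definition symon :: "('a \<Rightarrow> 'a \<Rightarrow> bool) \<Rightarrow> 'a set \<Rightarrow> bool" where
  "symon R S \<longleftrightarrow> (\<forall>x\<in>S. \<forall>y\<in>S. R x y \<longleftrightarrow> R y x)"

lemma symon_E: "fin_graph S E \<Longrightarrow> symon E S"
  unfolding fin_graph_def symon_def by auto

lemma symon_co: "fin_graph S E \<Longrightarrow> symon (co_adj E) S"
  unfolding fin_graph_def symon_def co_adj_def by auto

lemma restr_sym: "symon R S \<Longrightarrow> restr_rel R S x y \<Longrightarrow> restr_rel R S y x"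
  unfolding symon_def restr_rel_def by auto

lemma restr_rtr_sym: assumes "symon R S" "(restr_rel R S)\<^sup>*\<^sup>* x y" shows "(restr_rel R S)\<^sup>*\<^sup>* y x"
  using assms(2)
proof (induction rule: rtranclp_induct)
  case base then show ?case by simp
next
  case (step y z)
  then show ?case using assms(1) by (meson converse_rtranclp_into_rtranclp restr_sym)
qed

lemma components_props:
  assumes "symon R S" "C \<in> components R S"
  shows "C \<subseteq> S" "C \<noteq> {}"
  using assms unfolding components_def by auto

lemma components_disj:
  assumes "symon R S" "C1 \<in> components R S" "C2 \<in> components R S" "C1 \<inter> C2 \<noteq> {}"
  shows "C1 = C2"
proof -
  obtain x1 where x1: "x1 \<in> S" "C1 = {y \<in> S. (restr_rel R S)\<^sup>*\<^sup>* x1 y}" using assms(2) unfolding components_def by auto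
  obtain x2 where x2: "x2 \<in> S" "C2 = {y \<in> S. (restr_rel R S)\<^sup>*\<^sup>* x2 y}" using assms(3) unfolding components_def by auto
  obtain z where z: "z \<in> C1" "z \<in> C2" using assms(4) by auto
  have a: "(restr_rel R S)\<^sup>*\<^sup>* x1 x2" using z x1 x2 restr_rtr_sym[OF assms(1)]
    by (metis (no_types, lifting) mem_Collect_eq rtranclp_trans)
  have b: "(restr_rel R S)\<^sup>*\<^sup>* x2 x1" using a restr_rtr_sym[OF assms(1)] by blast
  show ?thesis unfolding x1 x2 using a b by (auto intro: rtranclp_trans)
qed

lemma components_proper:
  assumes "symon R S" "C \<in> components R S" "\<not> is_connected R S"
  shows "C \<noteq> S"
proof
  assume eq: "C = S"
  obtain x where x: "x \<in> S" "C = {y \<in> S. (restr_rel R S)\<^sup>*\<^sup>* x y}" using assms(2) unfolding components_def by auto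
  have "\<forall>y\<in>S. \<forall>z\<in>S. (restr_rel R S)\<^sup>*\<^sup>* y z"
  proof (intro ballI)
    fix y z assume "y \<in> S" "z \<in> S"
    then have "(restr_rel R S)\<^sup>*\<^sup>* x y" "(restr_rel R S)\<^sup>*\<^sup>* x z" using eq x by auto
    then show "(restr_rel R S)\<^sup>*\<^sup>* y z" using restr_rtr_sym[OF assms(1)] by (meson rtranclp_trans)
  qed
  then show False using assms(3) unfolding is_connected_def by blast
qed

lemma disconnected_split:
  assumes "A \<union> B = S" "A \<inter> B = {}" "a \<in> A" "b \<in> B" "\<forall>x\<in>A. \<forall>y\<in>B. \<not> R x y \<and> \<not> R y x"
  shows "\<not> is_connected R S"
proof
  assume c: "is_connected R S"
  have "b \<in> S" "a \<in> S" using assms by auto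
  then have r: "(restr_rel R S)\<^sup>*\<^sup>* a b" using c unfolding is_connected_def by auto
  have "\<And>y. (restr_rel R S)\<^sup>*\<^sup>* a y \<Longrightarrow> y \<in> A"
  proof -
    fix y assume "(restr_rel R S)\<^sup>*\<^sup>* a y"
    then show "y \<in> A"
    proof (induction rule: rtranclp_induct)
      case base then show ?case using assms by simp
    next
      case (step y z)
      then show ?case using assms unfolding restr_rel_def by blast
    qed
  qed
  then show False using r assms by blast
qed

lemma module_union:
  assumes "is_module E S M1" "is_module E S M2" "M1 \<inter> M2 \<noteq> {}"
  shows "is_module E S (M1 \<union> M2)"
proof -
  obtain w where w: "w \<in> M1" "w \<in> M2" using assms(3) by auto
  show ?thesis unfolding is_module_def
  proof (intro conjI ballI)
    show "M1 \<union> M2 \<subseteq> S" using assms unfolding is_module_def by auto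
    show "M1 \<union> M2 \<noteq> {}" using w by auto
    fix x assume x: "x \<in> S - (M1 \<union> M2)"
    have h1: "(\<forall>y\<in>M1. E x y) \<or> (\<forall>y\<in>M1. \<not> E x y)" using assms(1) x unfolding is_module_def by auto
    have h2: "(\<forall>y\<in>M2. E x y) \<or> (\<forall>y\<in>M2. \<not> E x y)" using assms(2) x unfolding is_module_def by auto
    show "(\<forall>y\<in>M1 \<union> M2. E x y) \<or> (\<forall>y\<in>M1 \<union> M2. \<not> E x y)" using h1 h2 w by auto
  qed
qed

lemma maxmod_disj:
  assumes g: "fin_graph S E" and c1: "is_connected E S" and c2: "is_connected (co_adj E) S"
    and m1: "M1 \<in> max_proper_modules E S" and m2: "M2 \<in> max_proper_modules E S"
    and ov: "M1 \<inter> M2 \<noteq> {}"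
  shows "M1 = M2"
proof (rule ccontr)
  assume ne: "M1 \<noteq> M2"
  have mod1: "is_module E S M1" "M1 \<noteq> S" and mx1: "\<And>M'. is_module E S M' \<Longrightarrow> M' \<noteq> S \<Longrightarrow> M1 \<subseteq> M' \<Longrightarrow> M' = M1"
    using m1 unfolding max_proper_modules_def by auto
  have mod2: "is_module E S M2" "M2 \<noteq> S" and mx2: "\<And>M'. is_module E S M' \<Longrightarrow> M' \<noteq> S \<Longrightarrow> M2 \<subseteq> M' \<Longrightarrow> M' = M2"
    using m2 unfolding max_proper_modules_def by auto
  have un: "is_module E S (M1 \<union> M2)" using module_union mod1 mod2 ov by blast
  have US: "M1 \<union> M2 = S"
  proof (rule ccontr)
    assume "M1 \<union> M2 \<noteq> S"
    then have "M1 \<union> M2 = M1" "M1 \<union> M2 = M2" using mx1 mx2 un by auto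
    then show False using ne by auto
  qed
  have sub1: "M1 \<subseteq> S" "M2 \<subseteq> S" using mod1 mod2 unfolding is_module_def by auto
  obtain x0 where x0: "x0 \<in> M2" "x0 \<notin> M1" using US mod1 by auto
  obtain y0 where y0: "y0 \<in> M1" "y0 \<notin> M2" using US mod2 by auto
  have u1: "\<And>x. x \<in> S - M1 \<Longrightarrow> (\<forall>y\<in>M1. E x y) \<or> (\<forall>y\<in>M1. \<not> E x y)" using mod1 unfolding is_module_def by auto
  have u2: "\<And>x. x \<in> S - M2 \<Longrightarrow> (\<forall>y\<in>M2. E x y) \<or> (\<forall>y\<in>M2. \<not> E x y)" using mod2 unfolding is_module_def by auto
  have sym: "\<And>x y. x \<in> S \<Longrightarrow> y \<in> S \<Longrightarrow> E x y = E y x" using g unfolding fin_graph_def by auto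
  have key: "\<And>x z. x \<in> S - M1 \<Longrightarrow> z \<in> M1 \<Longrightarrow> E x z = E x0 y0"
  proof -
    fix x z assume x: "x \<in> S - M1" and z: "z \<in> M1"
    have xM2: "x \<in> M2" using x US by auto
    have "E x z = E x y0" using u1[OF x] z y0 by auto
    also have "\<dots> = E y0 x" using sym sub1 x y0 by auto
    also have "\<dots> = E y0 x0" using u2[of y0] y0 sub1 xM2 x0 by auto
    also have "\<dots> = E x0 y0" using sym sub1 x0 y0 by auto
    finally show "E x z = E x0 y0" .
  qed
  have x0S: "x0 \<in> S - M1" using x0 sub1 by auto
  show False
  proof (cases "E x0 y0")
    case True
    have "\<not> is_connected (co_adj E) S"
      by (rule disconnected_split[of "S - M1" M1 S x0 y0]) (use US sub1 x0S y0 key True sym in \<open>auto simp: co_adj_def\<close>)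
    then show False using c2 by simp
  next
    case False
    have "\<not> is_connected E S"
      by (rule disconnected_split[of "S - M1" M1 S x0 y0]) (use US sub1 x0S y0 key False sym in \<open>auto\<close>)
    then show False using c1 by simp
  qed
qed

lemma mpart_props:
  assumes g: "fin_graph S E" and nl: "\<not> is_leaf E S" and M: "M \<in> mpart E S"
  shows "M \<subseteq> S" "M \<noteq> {}" "M \<noteq> S"
proof -
  have "M \<subseteq> S \<and> M \<noteq> {} \<and> M \<noteq> S"
  proof (cases "is_connected E S \<and> is_connected (co_adj E) S")
    case True
    then show ?thesis using M unfolding mpart_def max_proper_modules_def is_module_def by auto
  next
    case False
    note s1 = symon_E[OF g] and s2 = symon_co[OF g]
    show ?thesis
    proof (cases "is_connected E S")
      case True
      then have "M \<in> components (co_adj E) S" "\<not> is_connected (co_adj E) S" using M False unfolding mpart_def by auto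
      then show ?thesis using components_props[OF s2] components_proper[OF s2] by blast
    next
      case F: False
      then have "M \<in> components E S" using M unfolding mpart_def by auto
      then show ?thesis using components_props[OF s1] components_proper[OF s1] F by blast
    qed
  qed
  then show "M \<subseteq> S" "M \<noteq> {}" "M \<noteq> S" by auto
qed

lemma mpart_disj:
  assumes g: "fin_graph S E" and M1: "M1 \<in> mpart E S" and M2: "M2 \<in> mpart E S" and ov: "M1 \<inter> M2 \<noteq> {}"
  shows "M1 = M2"
proof (cases "is_connected E S \<and> is_connected (co_adj E) S")
  case True
  then show ?thesis using maxmod_disj[OF g _ _ _ _ ov] M1 M2 unfolding mpart_def by auto
next
  case False
  note s1 = symon_E[OF g] and s2 = symon_co[OF g]
  show ?thesis
  proof (cases "is_connected E S")
    case True
    then show ?thesis using M1 M2 False components_disj[OF s2 _ _ ov] unfolding mpart_def by auto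
  next
    case F: False
    then show ?thesis using M1 M2 components_disj[OF s1 _ _ ov] unfolding mpart_def by auto
  qed
qed


definition chd :: "('a \<Rightarrow> 'a \<Rightarrow> bool) \<Rightarrow> 'a set \<Rightarrow> 'a set \<Rightarrow> bool" where
  "chd E S M \<longleftrightarrow> \<not> is_leaf E S \<and> M \<in> mpart E S"

lemma dsets_eq1: "M \<in> dsets W E \<Longrightarrow> (chd E)\<^sup>*\<^sup>* W M"
  by (induction rule: dsets.induct) (auto simp: chd_def intro: rtranclp.rtrancl_into_rtrancl)

lemma dsets_eq2: "(chd E)\<^sup>*\<^sup>* W M \<Longrightarrow> M \<in> dsets W E"
  by (induction rule: rtranclp_induct) (auto simp: chd_def intro: dsets.intros)

lemma dsets_eq: "dsets W E = {M. (chd E)\<^sup>*\<^sup>* W M}"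
  using dsets_eq1 dsets_eq2 by blast

lemma NV_cases:
  assumes "x \<in> node_verts W E S"
  shows "(\<exists>z. x = Inl z \<and> z \<in> S \<and> is_leaf E S) \<or> (\<exists>K. x = Inr (K, False) \<and> chd E S K) \<or> (x = Inr (S, True) \<and> S \<noteq> W)"
  using assms unfolding node_verts_def chd_def by (auto split: if_splits)

lemma NV_True: "Inr (K, True) \<in> node_verts W E S \<longleftrightarrow> K = S \<and> S \<noteq> W"
  unfolding node_verts_def by auto

lemma NV_False: "Inr (K, False) \<in> node_verts W E S \<longleftrightarrow> chd E S K"
  unfolding node_verts_def chd_def by auto

lemma NV_Inl: "Inl z \<in> node_verts W E S \<longleftrightarrow> z \<in> S \<and> is_leaf E S"
  unfolding node_verts_def by auto

lemma NE_split: "node_edges W E S =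
     (if is_leaf E S then {(Inl x, Inl y) | x y. x \<in> S \<and> y \<in> S \<and> E x y}
      else {(Inr (M, False), Inr (M', False)) | M M'.
              M \<in> mpart E S \<and> M' \<in> mpart E S \<and> M \<noteq> M' \<and> mod_adjacent E M M'})
     \<union> (if S = W then {} else
          {(Inr (S, True), w) | w. w \<in> node_verts W E S - {Inr (S, True)}}
          \<union> {(w, Inr (S, True)) | w. w \<in> node_verts W E S - {Inr (S, True)}})"
  unfolding node_edges_def by simp

lemma NE_verts: "(x, y) \<in> node_edges W E S \<Longrightarrow> x \<in> node_verts W E S \<and> y \<in> node_verts W E S"
proof -
  assume h: "(x, y) \<in> node_edges W E S"
  show ?thesis
  proof (cases "is_leaf E S")
    case True
    then show ?thesis using h unfolding NE_split by (cases "S = W") (auto simp: NV_Inl NV_True)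
  next
    case False
    then show ?thesis using h unfolding NE_split by (cases "S = W") (auto simp: NV_False chd_def NV_True)
  qed
qed

definition NE0 :: "('a \<Rightarrow> 'a \<Rightarrow> bool) \<Rightarrow> 'a set \<Rightarrow> ('a mvert \<times> 'a mvert) set" where
  "NE0 E S = (if is_leaf E S then {(Inl x, Inl y) | x y. x \<in> S \<and> y \<in> S \<and> E x y}
      else {(Inr (M, False), Inr (M', False)) | M M'.
              M \<in> mpart E S \<and> M' \<in> mpart E S \<and> M \<noteq> M' \<and> mod_adjacent E M M'})"

lemma NE0_noTrue: "(Inr (K, True), y) \<notin> NE0 E S" "(y, Inr (K, True)) \<notin> NE0 E S"
  unfolding NE0_def by auto

lemma NE_mem: "(x, y) \<in> node_edges W E S \<longleftrightarrow> (x, y) \<in> NE0 E S \<or>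
   (S \<noteq> W \<and> ((x = Inr (S, True) \<and> y \<in> node_verts W E S - {Inr (S, True)}) \<or>
                  (y = Inr (S, True) \<and> x \<in> node_verts W E S - {Inr (S, True)})))"
  unfolding NE_split NE0_def[symmetric] by (cases "S = W") auto

lemma NE_head:
  "(Inr (S, True), y) \<in> node_edges W E S \<longleftrightarrow> S \<noteq> W \<and> y \<in> node_verts W E S - {Inr (S, True)}"
  "(y, Inr (S, True)) \<in> node_edges W E S \<longleftrightarrow> S \<noteq> W \<and> y \<in> node_verts W E S - {Inr (S, True)}"
  unfolding NE_mem by (auto simp: NE0_noTrue)

lemma NE_head_other: "K \<noteq> S \<Longrightarrow> (Inr (K, True), y) \<notin> node_edges W E S \<and> (y, Inr (K, True)) \<notin> node_edges W E S"
  using NE_verts[of "Inr (K,True)" y W E S] NE_verts[of y "Inr(K,True)" W E S] NV_True[of K W E S] by blast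

context
  fixes W :: "'a set" and E
  assumes g: "fin_graph W E"
begin

lemma dsets_sub: "S \<in> dsets W E \<Longrightarrow> S \<subseteq> W"
proof (induction rule: dsets.induct)
  case root then show ?case by simp
next
  case (child S M)
  then show ?case using mpart_props[OF fin_graph_subset[OF g]] by blast
qed

lemma dsets_fg: "S \<in> dsets W E \<Longrightarrow> fin_graph S E"
  using dsets_sub fin_graph_subset g by blast

lemma chd_props: "S \<in> dsets W E \<Longrightarrow> chd E S M \<Longrightarrow> M \<subseteq> S \<and> M \<noteq> {} \<and> M \<noteq> S \<and> M \<in> dsets W E"
  using mpart_props[OF dsets_fg] unfolding chd_def by (auto intro: dsets.child)

lemma chd_disj: "S \<in> dsets W E \<Longrightarrow> chd E S M1 \<Longrightarrow> chd E S M2 \<Longrightarrow> M1 \<inter> M2 \<noteq> {} \<Longrightarrow> M1 = M2"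
  using mpart_disj[OF dsets_fg] unfolding chd_def by blast

lemma desc_props:
  assumes "(chd E)\<^sup>*\<^sup>* S M" "S \<in> dsets W E"
  shows "M \<subseteq> S \<and> M \<in> dsets W E"
  using assms(1)
proof (induction rule: rtranclp_induct)
  case base then show ?case using assms by simp
next
  case (step y z) then show ?case using chd_props by blast
qed

lemma dsets_ne: "S \<in> dsets W E \<Longrightarrow> S = W \<or> S \<noteq> {}"
proof (induction rule: dsets.induct)
  case root then show ?case by simp
next
  case (child S M) then show ?case using chd_props[OF child.hyps(1), of M] by (simp add: chd_def)
qed

lemma desc_first:
  assumes "(chd E)\<^sup>*\<^sup>* S M" "M \<noteq> S"
  shows "\<exists>C. chd E S C \<and> (chd E)\<^sup>*\<^sup>* C M"
  using assms by (blast elim: converse_rtranclpE)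

lemma desc_proper:
  assumes "(chd E)\<^sup>*\<^sup>* S M" "M \<noteq> S" "S \<in> dsets W E"
  shows "M \<subset> S"
proof -
  obtain C where C: "chd E S C" "(chd E)\<^sup>*\<^sup>* C M" using desc_first assms by blast
  have "C \<subset> S" "C \<in> dsets W E" using chd_props[OF assms(3) C(1)] by auto
  then show ?thesis using desc_props[OF C(2)] by auto
qed

lemma laminar:
  assumes S: "S \<in> dsets W E" and M: "M \<in> dsets W E" and ov: "S \<inter> M \<noteq> {}"
  shows "(chd E)\<^sup>*\<^sup>* S M \<or> (chd E)\<^sup>*\<^sup>* M S"
proof -
  have "(chd E)\<^sup>*\<^sup>* W S" using S dsets_eq by blast
  then show ?thesis using ov
  proof (induction arbitrary: rule: rtranclp_induct)
    case base
    then show ?case using M dsets_eq by blast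
  next
    case (step S0 S)
    have S0d: "S0 \<in> dsets W E" using step.hyps(1) dsets_eq by blast
    have "S \<subseteq> S0" using chd_props[OF S0d step.hyps(2)] by auto
    then have "S0 \<inter> M \<noteq> {}" using step.prems by auto
    then have ih: "(chd E)\<^sup>*\<^sup>* S0 M \<or> (chd E)\<^sup>*\<^sup>* M S0" using step.IH by blast
    show ?case
    proof (cases "(chd E)\<^sup>*\<^sup>* M S0")
      case True
      then show ?thesis using step.hyps(2) by (meson rtranclp.rtrancl_into_rtrancl)
    next
      case False
      then have d: "(chd E)\<^sup>*\<^sup>* S0 M" "M \<noteq> S0" using ih by auto
      obtain C where C: "chd E S0 C" "(chd E)\<^sup>*\<^sup>* C M" using desc_first[OF d] by blast
      have Cd: "C \<in> dsets W E" using chd_props[OF S0d C(1)] by auto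
      have "M \<subseteq> C" using desc_props[OF C(2) Cd] by auto
      then have "C \<inter> S \<noteq> {}" using step.prems by auto
      then have "C = S" using chd_disj[OF S0d C(1) step.hyps(2)] by auto
      then show ?thesis using C by auto
    qed
  qed
qed

lemma desc_iff_sub:
  assumes S: "S \<in> dsets W E" and M: "M \<in> dsets W E" and ne: "M \<noteq> {}"
  shows "(chd E)\<^sup>*\<^sup>* S M \<longleftrightarrow> M \<subseteq> S"
proof
  assume "(chd E)\<^sup>*\<^sup>* S M" then show "M \<subseteq> S" using desc_props S by blast
next
  assume sub: "M \<subseteq> S"
  then have "S \<inter> M \<noteq> {}" using ne by auto
  then have "(chd E)\<^sup>*\<^sup>* S M \<or> (chd E)\<^sup>*\<^sup>* M S" using laminar S M by blast
  then show "(chd E)\<^sup>*\<^sup>* S M"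
  proof
    assume "(chd E)\<^sup>*\<^sup>* M S"
    then have "S \<subseteq> M" using desc_props M by blast
    then have "S = M" using sub by auto
    then show ?thesis by simp
  qed
qed

lemma leaf_no_chd: "is_leaf E S \<Longrightarrow> \<not> chd E S M"
  unfolding chd_def by auto

lemma NV_uniq:
  assumes S1: "S1 \<in> dsets W E" and S2: "S2 \<in> dsets W E"
    and x1: "x \<in> node_verts W E S1" and x2: "x \<in> node_verts W E S2"
  shows "S1 = S2"
proof -
  consider (l) z where "x = Inl z" "z \<in> S1" "is_leaf E S1"
    | (f) K where "x = Inr (K, False)" "chd E S1 K"
    | (t) "x = Inr (S1, True)"
    using NV_cases[OF x1] by fast
  then show ?thesis
  proof cases
    case l
    then have "z \<in> S2" "is_leaf E S2" using NV_Inl[of z W E S2] x2 l by auto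
    then have "(chd E)\<^sup>*\<^sup>* S1 S2 \<or> (chd E)\<^sup>*\<^sup>* S2 S1" using laminar S1 S2 l by blast
    moreover have "A = B" if "(chd E)\<^sup>*\<^sup>* A B" "is_leaf E A" for A B
      using that leaf_no_chd by (blast elim: converse_rtranclpE)
    ultimately show ?thesis using l \<open>is_leaf E S2\<close> by blast
  next
    case f
    then have f2: "chd E S2 K" using x2 NV_False by auto
    have Kp1: "K \<subseteq> S1 \<and> K \<noteq> {} \<and> K \<noteq> S1" using chd_props[OF S1 f(2)] by auto
    have Kp2: "K \<subseteq> S2 \<and> K \<noteq> {} \<and> K \<noteq> S2" using chd_props[OF S2 f2] by auto
    have "S1 \<inter> S2 \<noteq> {}" using Kp1 Kp2 by auto
    then have lam: "(chd E)\<^sup>*\<^sup>* S1 S2 \<or> (chd E)\<^sup>*\<^sup>* S2 S1" using laminar S1 S2 by blast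
    have gen: "A = B" if A: "A \<in> dsets W E" "chd E A K" and B: "B \<in> dsets W E" "chd E B K"
        and d: "(chd E)\<^sup>*\<^sup>* A B" for A B
    proof (rule ccontr)
      assume "A \<noteq> B"
      then obtain C where C: "chd E A C" "(chd E)\<^sup>*\<^sup>* C B" using desc_first[OF d] \<open>A \<noteq> B\<close> by blast
      have Cd: "C \<in> dsets W E" using chd_props A C by blast
      have "B \<subseteq> C" using desc_props[OF C(2) Cd] by auto
      moreover have KB: "K \<subseteq> B" "K \<noteq> B" "K \<noteq> {}" using chd_props[OF B] by auto
      ultimately have "K \<inter> C \<noteq> {}" by auto
      then have "K = C" using chd_disj[OF A(1) A(2) C(1)] by auto
      then show False using KB \<open>B \<subseteq> C\<close> by auto
    qed
    show ?thesis using lam gen[OF S1 f(2) S2 f2] gen[OF S2 f2 S1 f(2)] by auto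
  next
    case t
    then show ?thesis using x2 NV_True[of S1 W E S2] by auto
  qed
qed

end


lemma mverts_mt: "x \<in> mverts (modtree W E) \<longleftrightarrow> (\<exists>S\<in>dsets W E. x \<in> node_verts W E S)"
  unfolding modtree_def by simp

lemma mnedges_mt: "p \<in> mnedges (modtree W E) \<longleftrightarrow> (\<exists>S\<in>dsets W E. p \<in> node_edges W E S)"
  unfolding modtree_def by simp

lemma mtedges_mt: "(x, y) \<in> mtedges (modtree W E) \<longleftrightarrow>
    (\<exists>M. x = Inr (M, False) \<and> y = Inr (M, True) \<and> M \<in> dsets W E \<and> M \<noteq> W)"
  unfolding modtree_def by auto

lemma mnormal_mt: "mnormal (modtree W E) = Inl ` W"
  unfolding modtree_def by simp

definition heads :: "'v mtree \<Rightarrow> 'v set" where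
  "heads T = {y. \<exists>x. (x, y) \<in> mtedges T}"

definition rootprop :: "'v mtree \<Rightarrow> 'v \<Rightarrow> bool" where
  "rootprop T x \<longleftrightarrow> x \<in> mverts T \<and> x \<notin> heads T \<and> (\<forall>z. (x, z) \<in> mnedges T \<longrightarrow> z \<notin> heads T)"

definition wft :: "'v mtree \<Rightarrow> bool" where
  "wft T \<longleftrightarrow> mnedges T \<subseteq> mverts T \<times> mverts T \<and> mtedges T \<subseteq> mverts T \<times> mverts T"

lemma heads_mt: "y \<in> heads (modtree W E) \<longleftrightarrow> (\<exists>M. y = Inr (M, True) \<and> M \<in> dsets W E \<and> M \<noteq> W)"
  unfolding heads_def mtedges_mt by auto

context
  fixes W :: "'a set" and E
  assumes g: "fin_graph W E"
begin

lemma parent_exists: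
  assumes "M \<in> dsets W E" "M \<noteq> W"
  shows "\<exists>S\<in>dsets W E. chd E S M"
proof -
  have "(chd E)\<^sup>*\<^sup>* W M" using assms dsets_eq by blast
  then obtain S where "(chd E)\<^sup>*\<^sup>* W S" "chd E S M" using assms(2) by (blast elim: rtranclp.cases)
  then show ?thesis using dsets_eq by blast
qed

lemma wft_ne: "(x, y) \<in> mnedges (modtree W E) \<Longrightarrow> x \<in> mverts (modtree W E) \<and> y \<in> mverts (modtree W E)"
proof -
  assume "(x, y) \<in> mnedges (modtree W E)"
  then obtain S where S: "S \<in> dsets W E" "(x, y) \<in> node_edges W E S" unfolding mnedges_mt by blast
  have "x \<in> node_verts W E S" "y \<in> node_verts W E S" using NE_verts[OF S(2)] by auto
  then show ?thesis using S(1) unfolding mverts_mt by blast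
qed

lemma wft_te: "(x, y) \<in> mtedges (modtree W E) \<Longrightarrow> x \<in> mverts (modtree W E) \<and> y \<in> mverts (modtree W E)"
proof -
  assume "(x, y) \<in> mtedges (modtree W E)"
  then obtain M where M: "x = Inr (M, False)" "y = Inr (M, True)" "M \<in> dsets W E" "M \<noteq> W"
    unfolding mtedges_mt by blast
  obtain S where S: "S \<in> dsets W E" "chd E S M" using parent_exists M(3,4) by blast
  have "x \<in> node_verts W E S" unfolding M(1) NV_False using S(2) .
  moreover have "y \<in> node_verts W E M" unfolding M(2) NV_True using M(4) by simp
  ultimately show ?thesis using S(1) M(3) unfolding mverts_mt by blast
qed

lemma wft_mt: "wft (modtree W E)"
  unfolding wft_def using wft_ne wft_te by auto

lemma root_char: "rootprop (modtree W E) x \<longleftrightarrow> x \<in> node_verts W E W"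
proof
  assume x: "x \<in> node_verts W E W"
  have Wd: "W \<in> dsets W E" by (rule dsets.root)
  have "x \<in> mverts (modtree W E)" using x Wd unfolding mverts_mt by blast
  moreover have "x \<notin> heads (modtree W E)"
    using x NV_True unfolding heads_mt by blast
  moreover have "z \<notin> heads (modtree W E)" if e: "(x, z) \<in> mnedges (modtree W E)" for z
  proof -
    obtain S where S: "S \<in> dsets W E" "(x, z) \<in> node_edges W E S" using e unfolding mnedges_mt by blast
    have "x \<in> node_verts W E S" "z \<in> node_verts W E S" using NE_verts S by blast+
    then have "S = W" using NV_uniq[OF g S(1) Wd] x by blast
    then show ?thesis using \<open>z \<in> node_verts W E S\<close> NV_True unfolding heads_mt by blast
  qed
  ultimately show "rootprop (modtree W E) x" unfolding rootprop_def by blast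
next
  assume r: "rootprop (modtree W E) x"
  then obtain S where S: "S \<in> dsets W E" "x \<in> node_verts W E S" unfolding rootprop_def mverts_mt by blast
  show "x \<in> node_verts W E W"
  proof (rule ccontr)
    assume nx: "x \<notin> node_verts W E W"
    then have SW: "S \<noteq> W" using S by auto
    have hd: "Inr (S, True) \<in> heads (modtree W E)" using S SW unfolding heads_mt by blast
    show False
    proof (cases "x = Inr (S, True)")
      case True then show False using r hd unfolding rootprop_def by blast
    next
      case False
      then have "(x, Inr (S, True)) \<in> node_edges W E S" using NE_head(2) SW S by blast
      then have "(x, Inr (S, True)) \<in> mnedges (modtree W E)" using S unfolding mnedges_mt by blast
      then show False using r hd unfolding rootprop_def by blast
    qed
  qed
qed

end


lemma mt_isom_comp:
  assumes f: "mt_isom T1 T2 f" and g: "mt_isom T2 T3 h"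
  shows "mt_isom T1 T3 (h \<circ> f)"
proof -
  have bf: "bij_betw f (mverts T1) (mverts T2)" and bh: "bij_betw h (mverts T2) (mverts T3)"
    using f g unfolding mt_isom_def by auto
  have fin: "\<And>x. x \<in> mverts T1 \<Longrightarrow> f x \<in> mverts T2" using bf bij_betwE by blast
  show ?thesis unfolding mt_isom_def
  proof (intro conjI ballI)
    show "bij_betw (h \<circ> f) (mverts T1) (mverts T3)" using bf bh bij_betw_trans by blast
    fix x assume x: "x \<in> mverts T1"
    show "x \<in> mnormal T1 \<longleftrightarrow> (h \<circ> f) x \<in> mnormal T3" using f g x fin unfolding mt_isom_def by auto
    fix y assume y: "y \<in> mverts T1"
    show "((x, y) \<in> mnedges T1) = (((h \<circ> f) x, (h \<circ> f) y) \<in> mnedges T3)"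
      using f g x y fin unfolding mt_isom_def by auto
    show "((x, y) \<in> mtedges T1) = (((h \<circ> f) x, (h \<circ> f) y) \<in> mtedges T3)"
      using f g x y fin unfolding mt_isom_def by auto
  qed
qed

lemma mt_isom_cong:
  assumes f: "mt_isom T1 T2 f" and eq: "\<And>x. x \<in> mverts T1 \<Longrightarrow> f' x = f x"
  shows "mt_isom T1 T2 f'"
proof -
  have "bij_betw f' (mverts T1) (mverts T2)"
    using f eq bij_betw_cong unfolding mt_isom_def by blast
  then show ?thesis using f eq unfolding mt_isom_def by auto
qed

lemma mt_isom_inv:
  assumes f: "mt_isom T1 T2 f"
  shows "mt_isom T2 T1 (inv_into (mverts T1) f)"
proof -
  let ?g = "inv_into (mverts T1) f"
  have bf: "bij_betw f (mverts T1) (mverts T2)" using f unfolding mt_isom_def by auto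
  have bg: "bij_betw ?g (mverts T2) (mverts T1)" using bf bij_betw_inv_into by blast
  have gin: "\<And>y. y \<in> mverts T2 \<Longrightarrow> ?g y \<in> mverts T1" using bg bij_betwE by blast
  have fg: "\<And>y. y \<in> mverts T2 \<Longrightarrow> f (?g y) = y" using bf bij_betw_inv_into_right by metis
  show ?thesis unfolding mt_isom_def
  proof (intro conjI ballI)
    show "bij_betw ?g (mverts T2) (mverts T1)" by (rule bg)
    fix x assume x: "x \<in> mverts T2"
    show "x \<in> mnormal T2 \<longleftrightarrow> ?g x \<in> mnormal T1" using f x gin fg unfolding mt_isom_def by metis
    fix y assume y: "y \<in> mverts T2"
    have e1: "((?g x, ?g y) \<in> mnedges T1) = ((f (?g x), f (?g y)) \<in> mnedges T2)"
      using f gin x y unfolding mt_isom_def by blast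
    have e2: "((?g x, ?g y) \<in> mtedges T1) = ((f (?g x), f (?g y)) \<in> mtedges T2)"
      using f gin x y unfolding mt_isom_def by blast
    show "((x, y) \<in> mnedges T2) = ((?g x, ?g y) \<in> mnedges T1)" using e1 fg x y by simp
    show "((x, y) \<in> mtedges T2) = ((?g x, ?g y) \<in> mtedges T1)" using e2 fg x y by simp
  qed
qed

lemma mt_isom_id: "mt_isom T T id"
  unfolding mt_isom_def by auto

lemma mt_isom_restrict_id: "mt_isom T T (restrict id (mverts T))"
  by (rule mt_isom_cong[OF mt_isom_id]) simp

lemma mt_isomorphic_sym: "mt_isomorphic T1 T2 \<Longrightarrow> mt_isomorphic T2 T1"
  unfolding mt_isomorphic_def using mt_isom_inv by blast

lemma mt_isomorphic_trans: "mt_isomorphic T1 T2 \<Longrightarrow> mt_isomorphic T2 T3 \<Longrightarrow> mt_isomorphic T1 T3"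
  unfolding mt_isomorphic_def using mt_isom_comp by blast

lemma mt_isomorphic_refl: "mt_isomorphic T T"
  unfolding mt_isomorphic_def using mt_isom_id by blast

lemma mt_isom_in: "mt_isom T1 T2 f \<Longrightarrow> x \<in> mverts T1 \<Longrightarrow> f x \<in> mverts T2"
  unfolding mt_isom_def using bij_betwE by blast

lemma mt_isom_ex_ext: "mt_isom T1 T2 f \<Longrightarrow> \<exists>f'. f' \<in> extensional (mverts T1) \<and> mt_isom T1 T2 f'"
  using mt_isom_cong[of T1 T2 f "restrict f (mverts T1)"] by auto

lemma heads_iso:
  assumes w1: "wft T1" and w2: "wft T2" and f: "mt_isom T1 T2 f" and x: "x \<in> mverts T1"
  shows "f x \<in> heads T2 \<longleftrightarrow> x \<in> heads T1"
proof
  assume "x \<in> heads T1"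
  then obtain z where z: "(z, x) \<in> mtedges T1" unfolding heads_def by blast
  then have "z \<in> mverts T1" using w1 unfolding wft_def by blast
  then have "(f z, f x) \<in> mtedges T2" using f x z unfolding mt_isom_def by blast
  then show "f x \<in> heads T2" unfolding heads_def by blast
next
  assume "f x \<in> heads T2"
  then obtain z' where z': "(z', f x) \<in> mtedges T2" unfolding heads_def by blast
  then have "z' \<in> mverts T2" using w2 unfolding wft_def by blast
  then obtain z where z: "z \<in> mverts T1" "z' = f z" using f unfolding mt_isom_def bij_betw_def by blast
  then have "(z, x) \<in> mtedges T1" using f x z' unfolding mt_isom_def by blast
  then show "x \<in> heads T1" unfolding heads_def by blast
qed

lemma rootprop_iso:
  assumes w1: "wft T1" and w2: "wft T2" and f: "mt_isom T1 T2 f" and x: "x \<in> mverts T1"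
  shows "rootprop T2 (f x) \<longleftrightarrow> rootprop T1 x"
proof -
  have fx: "f x \<in> mverts T2" using mt_isom_in[OF f x] .
  have h1: "f x \<in> heads T2 \<longleftrightarrow> x \<in> heads T1" using heads_iso[OF w1 w2 f x] .
  have h2: "(\<forall>z'. (f x, z') \<in> mnedges T2 \<longrightarrow> z' \<notin> heads T2) \<longleftrightarrow> (\<forall>z. (x, z) \<in> mnedges T1 \<longrightarrow> z \<notin> heads T1)"
  proof
    assume a: "\<forall>z'. (f x, z') \<in> mnedges T2 \<longrightarrow> z' \<notin> heads T2"
    show "\<forall>z. (x, z) \<in> mnedges T1 \<longrightarrow> z \<notin> heads T1"
    proof (intro allI impI)
      fix z assume e: "(x, z) \<in> mnedges T1"
      then have z: "z \<in> mverts T1" using w1 unfolding wft_def by blast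
      then have "(f x, f z) \<in> mnedges T2" using f x e unfolding mt_isom_def by blast
      then have "f z \<notin> heads T2" using a by blast
      then show "z \<notin> heads T1" using heads_iso[OF w1 w2 f z] by blast
    qed
  next
    assume a: "\<forall>z. (x, z) \<in> mnedges T1 \<longrightarrow> z \<notin> heads T1"
    show "\<forall>z'. (f x, z') \<in> mnedges T2 \<longrightarrow> z' \<notin> heads T2"
    proof (intro allI impI)
      fix z' assume e: "(f x, z') \<in> mnedges T2"
      then have "z' \<in> mverts T2" using w2 unfolding wft_def by blast
      then obtain z where z: "z \<in> mverts T1" "z' = f z" using f unfolding mt_isom_def bij_betw_def by blast
      then have "(x, z) \<in> mnedges T1" using f x e unfolding mt_isom_def by blast
      then have "z \<notin> heads T1" using a by blast
      then show "z' \<notin> heads T2" using heads_iso[OF w1 w2 f z(1)] z by blast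
    qed
  qed
  show ?thesis unfolding rootprop_def using fx x h1 h2 by blast
qed

definition step :: "'v mtree \<Rightarrow> 'v \<Rightarrow> 'v \<Rightarrow> bool" where
  "step T x y \<longleftrightarrow> (x, y) \<in> mtedges T \<or> ((x, y) \<in> mnedges T \<and> x \<in> heads T)"

lemma step_in: "wft T \<Longrightarrow> step T x y \<Longrightarrow> x \<in> mverts T \<and> y \<in> mverts T"
  unfolding step_def wft_def by blast

lemma step_iso:
  assumes w1: "wft T1" and w2: "wft T2" and f: "mt_isom T1 T2 f" and x: "x \<in> mverts T1" and y: "y \<in> mverts T1"
  shows "step T2 (f x) (f y) \<longleftrightarrow> step T1 x y"
  unfolding step_def using heads_iso[OF w1 w2 f x] f x y unfolding mt_isom_def by blast

lemma reach_iso1: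
  assumes w1: "wft T1" and w2: "wft T2" and f: "mt_isom T1 T2 f" and x: "x \<in> mverts T1"
    and r: "(step T1)\<^sup>*\<^sup>* x y"
  shows "(step T2)\<^sup>*\<^sup>* (f x) (f y)"
  using r
proof (induction rule: rtranclp_induct)
  case base then show ?case by simp
next
  case (step y z)
  have "y \<in> mverts T1" "z \<in> mverts T1" using step_in[OF w1 step.hyps(2)] by auto
  then have "step T2 (f y) (f z)" using step_iso[OF w1 w2 f] step.hyps(2) by blast
  with step.IH show ?case by (rule rtranclp.rtrancl_into_rtrancl)
qed

lemma reach_iso2:
  assumes w1: "wft T1" and w2: "wft T2" and f: "mt_isom T1 T2 f" and x: "x \<in> mverts T1"
    and r: "(step T2)\<^sup>*\<^sup>* (f x) y'"
  shows "\<exists>y. y' = f y \<and> (step T1)\<^sup>*\<^sup>* x y"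
  using r
proof (induction rule: rtranclp_induct)
  case base then show ?case by blast
next
  case (step y' z')
  obtain y where y: "y' = f y" "(step T1)\<^sup>*\<^sup>* x y" using step.IH by blast
  have yv: "y \<in> mverts T1"
  proof (cases "y = x")
    case True then show ?thesis using x by simp
  next
    case False
    then show ?thesis using y(2) step_in[OF w1] by (metis rtranclp.cases)
  qed
  have "z' \<in> mverts T2" using step_in[OF w2 step.hyps(2)] by auto
  then obtain z where z: "z \<in> mverts T1" "z' = f z" using f unfolding mt_isom_def bij_betw_def by blast
  have "step T1 y z" using step_iso[OF w1 w2 f yv z(1)] step.hyps(2) y(1) z(2) by blast
  then have "(step T1)\<^sup>*\<^sup>* x z" using y(2) by (rule rtranclp.rtrancl_into_rtrancl[rotated])
  then show ?case using z(2) by blast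
qed

lemma reach_iso:
  assumes w1: "wft T1" and w2: "wft T2" and f: "mt_isom T1 T2 f" and x: "x \<in> mverts T1"
  shows "f ` {y. (step T1)\<^sup>*\<^sup>* x y} = {y'. (step T2)\<^sup>*\<^sup>* (f x) y'}"
  using reach_iso1[OF assms] reach_iso2[OF assms] by blast


definition hdv :: "'a mvert \<Rightarrow> 'a mvert" where "hdv u = Inr (marker_set u, True)"

lemma marker_set_Inr[simp]: "marker_set (Inr (M, b)) = M"
  unfolding marker_set_def by simp

context
  fixes V :: "'a set" and E
  assumes g: "fin_graph V E"
begin

lemma Vd: "V \<in> dsets V E" by (rule dsets.root)

lemma rm_iff: "u \<in> root_markers V E \<longleftrightarrow> (\<exists>M. u = Inr (M, False) \<and> chd E V M)"
proof
  assume u: "u \<in> root_markers V E"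
  then have u1: "u \<in> node_verts V E V" "u \<notin> Inl ` V"
    unfolding root_markers_def root_node_def mnormal_mt by auto
  show "\<exists>M. u = Inr (M, False) \<and> chd E V M" using NV_cases[OF u1(1)] u1(2) by blast
next
  assume "\<exists>M. u = Inr (M, False) \<and> chd E V M"
  then obtain M where M: "u = Inr (M, False)" "chd E V M" by blast
  have "u \<in> node_verts V E V" using M by (simp add: NV_False)
  then show "u \<in> root_markers V E" unfolding root_markers_def root_node_def mnormal_mt using M by auto
qed

lemma chdV: "chd E V M \<Longrightarrow> M \<subseteq> V \<and> M \<noteq> {} \<and> M \<noteq> V \<and> M \<in> dsets V E \<and> fin_graph M E"
  using chd_props[OF g Vd] fin_graph_subset[OF g] by blast

lemma dsetsM: "chd E V M \<Longrightarrow> S \<in> dsets M E \<longleftrightarrow> S \<in> dsets V E \<and> S \<subseteq> M"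
proof
  assume M: "chd E V M" and S: "S \<in> dsets M E"
  have Md: "M \<in> dsets V E" using chdV M by blast
  have "(chd E)\<^sup>*\<^sup>* M S" using S dsets_eq by blast
  moreover have "(chd E)\<^sup>*\<^sup>* V M" using M by blast
  ultimately have "(chd E)\<^sup>*\<^sup>* V S" by auto
  then have "S \<in> dsets V E" using dsets_eq by blast
  moreover have "S \<subseteq> M" using desc_props[OF g \<open>(chd E)\<^sup>*\<^sup>* M S\<close> Md] by blast
  ultimately show "S \<in> dsets V E \<and> S \<subseteq> M" by blast
next
  assume M: "chd E V M" and S: "S \<in> dsets V E \<and> S \<subseteq> M"
  have Mp: "M \<subseteq> V" "M \<noteq> V" "M \<in> dsets V E" using chdV M by auto
  then have "S \<noteq> V" using S by auto
  then have "S \<noteq> {}" using dsets_ne[OF g] S by blast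
  then have "(chd E)\<^sup>*\<^sup>* M S" using desc_iff_sub[OF g Mp(3)] S by blast
  then show "S \<in> dsets M E" using dsets_eq by blast
qed

lemma NVM: "S \<noteq> V \<Longrightarrow> chd E V M \<Longrightarrow> x \<in> node_verts M E S \<longleftrightarrow> x \<in> node_verts V E S \<and> x \<noteq> Inr (M, True)"
  by (cases "S = M"; cases "is_leaf E S") (auto simp: node_verts_def)

lemma NEM: "S \<noteq> V \<Longrightarrow> chd E V M \<Longrightarrow>
    (x, y) \<in> node_edges M E S \<longleftrightarrow> (x, y) \<in> node_edges V E S \<and> x \<noteq> Inr (M, True) \<and> y \<noteq> Inr (M, True)"
proof -
  assume SV: "S \<noteq> V" and M: "chd E V M"
  have nv: "\<And>z. z \<in> node_verts M E S \<longleftrightarrow> z \<in> node_verts V E S \<and> z \<noteq> Inr (M, True)" using NVM SV M by blast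
  have n0: "(x, y) \<in> NE0 E S \<Longrightarrow> x \<noteq> Inr (M, True) \<and> y \<noteq> Inr (M, True)" using NE0_noTrue by blast
  have nt: "Inr (M, True) \<in> node_verts V E S \<Longrightarrow> S = M" by (simp add: NV_True)
  show ?thesis
  proof (cases "S = M")
    case True
    then show ?thesis unfolding NE_mem[of x y M E S] NE_mem[of x y V E S] using n0 SV by auto
  next
    case False
    have "(x, y) \<in> node_edges M E S \<longleftrightarrow> (x, y) \<in> NE0 E S \<or>
     ((x = Inr (S, True) \<and> y \<in> node_verts V E S \<and> y \<noteq> Inr (M, True) \<and> y \<noteq> Inr (S, True)) \<or>
                  (y = Inr (S, True) \<and> x \<in> node_verts V E S \<and> x \<noteq> Inr (M, True) \<and> x \<noteq> Inr (S, True)))"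
      unfolding NE_mem[of x y M E S] Diff_iff singleton_iff nv using False by blast
    moreover have "(x, y) \<in> node_edges V E S \<longleftrightarrow> (x, y) \<in> NE0 E S \<or>
     ((x = Inr (S, True) \<and> y \<in> node_verts V E S \<and> y \<noteq> Inr (S, True)) \<or>
                  (y = Inr (S, True) \<and> x \<in> node_verts V E S \<and> x \<noteq> Inr (S, True)))"
      unfolding NE_mem[of x y V E S] Diff_iff singleton_iff using SV by blast
    ultimately show ?thesis using n0 nt False by auto
  qed
qed

lemma Bv_iff: "chd E V M \<Longrightarrow> x \<in> mverts (modtree M E) \<longleftrightarrow>
   (\<exists>S\<in>dsets V E. S \<subseteq> M \<and> x \<in> node_verts V E S) \<and> x \<noteq> Inr (M, True)"
proof -
  assume M: "chd E V M"
  have Mp: "M \<subseteq> V" "M \<noteq> V" using chdV M by auto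
  show ?thesis
  proof
    assume "x \<in> mverts (modtree M E)"
    then obtain S where S: "S \<in> dsets M E" "x \<in> node_verts M E S" unfolding mverts_mt by blast
    have S1: "S \<in> dsets V E" "S \<subseteq> M" using S(1) dsetsM[OF M] by auto
    then have "S \<noteq> V" using Mp by auto
    then have "x \<in> node_verts V E S" "x \<noteq> Inr (M, True)" using S(2) NVM[OF _ M] by auto
    then show "(\<exists>S\<in>dsets V E. S \<subseteq> M \<and> x \<in> node_verts V E S) \<and> x \<noteq> Inr (M, True)" using S1 by blast
  next
    assume "(\<exists>S\<in>dsets V E. S \<subseteq> M \<and> x \<in> node_verts V E S) \<and> x \<noteq> Inr (M, True)"
    then obtain S where S: "S \<in> dsets V E" "S \<subseteq> M" "x \<in> node_verts V E S" and xh: "x \<noteq> Inr (M, True)" by blast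
    have "S \<in> dsets M E" using S dsetsM[OF M] by auto
    moreover have "S \<noteq> V" using S(2) Mp by auto
    then have "x \<in> node_verts M E S" using S(3) xh NVM[OF _ M] by auto
    ultimately show "x \<in> mverts (modtree M E)" unfolding mverts_mt by blast
  qed
qed

lemma Pv_iff: "chd E V M \<Longrightarrow> x \<in> insert (Inr (M, True)) (mverts (modtree M E)) \<longleftrightarrow>
   (\<exists>S\<in>dsets V E. S \<subseteq> M \<and> x \<in> node_verts V E S)"
proof -
  assume M: "chd E V M"
  have Mp: "M \<noteq> V" "M \<in> dsets V E" using chdV M by auto
  have h: "Inr (M, True) \<in> node_verts V E M" using Mp by (simp add: NV_True)
  show ?thesis
  proof (cases "x = Inr (M, True)")
    case True then show ?thesis using h Mp by auto
  next
    case False then show ?thesis using Bv_iff[OF M, of x] by simp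
  qed
qed

lemma cover: "x \<in> mverts (modtree V E) \<Longrightarrow> x \<in> node_verts V E V \<or>
   (\<exists>M. chd E V M \<and> x \<in> insert (Inr (M, True)) (mverts (modtree M E)))"
proof -
  assume "x \<in> mverts (modtree V E)"
  then obtain S where S: "S \<in> dsets V E" "x \<in> node_verts V E S" unfolding mverts_mt by blast
  show ?thesis
  proof (cases "S = V")
    case True then show ?thesis using S by simp
  next
    case False
    have "(chd E)\<^sup>*\<^sup>* V S" using S dsets_eq by blast
    then obtain C where C: "chd E V C" "(chd E)\<^sup>*\<^sup>* C S" using desc_first[OF g] False by blast
    have "S \<subseteq> C" using desc_props[OF g C(2)] chdV[OF C(1)] by blast
    then show ?thesis using Pv_iff[OF C(1)] C(1) S by blast
  qed
qed

lemma disjN: "chd E V M \<Longrightarrow> x \<in> node_verts V E V \<Longrightarrow> x \<notin> insert (Inr (M, True)) (mverts (modtree M E))"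
proof
  assume M: "chd E V M" and x: "x \<in> node_verts V E V" and "x \<in> insert (Inr (M, True)) (mverts (modtree M E))"
  then obtain S where S: "S \<in> dsets V E" "S \<subseteq> M" "x \<in> node_verts V E S" using Pv_iff by blast
  have "S = V" using NV_uniq[OF g S(1) Vd S(3) x] .
  then show False using S(2) chdV[OF M] by auto
qed

lemma disjP: "chd E V M \<Longrightarrow> chd E V M' \<Longrightarrow> x \<in> insert (Inr (M, True)) (mverts (modtree M E)) \<Longrightarrow>
    x \<in> insert (Inr (M', True)) (mverts (modtree M' E)) \<Longrightarrow> M = M'"
proof -
  assume M: "chd E V M" and M': "chd E V M'"
    and x1: "x \<in> insert (Inr (M, True)) (mverts (modtree M E))"
    and x2: "x \<in> insert (Inr (M', True)) (mverts (modtree M' E))"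
  obtain S where S: "S \<in> dsets V E" "S \<subseteq> M" "x \<in> node_verts V E S" using Pv_iff[OF M] x1 by blast
  obtain S' where S': "S' \<in> dsets V E" "S' \<subseteq> M'" "x \<in> node_verts V E S'" using Pv_iff[OF M'] x2 by blast
  have "S = S'" using NV_uniq[OF g S(1) S'(1) S(3) S'(3)] .
  moreover have "S \<noteq> {}" using dsets_ne[OF g S(1)] S(2) chdV[OF M] by auto
  ultimately have "M \<inter> M' \<noteq> {}" using S(2) S'(2) by auto
  then show "M = M'" using chd_disj[OF g Vd M M'] by blast
qed

lemma hd_notB: "chd E V M \<Longrightarrow> Inr (M, True) \<notin> mverts (modtree M E)"
  by (simp add: Bv_iff)

end


context
  fixes V :: "'a set" and E
  assumes g: "fin_graph V E"
begin

lemma loc_sub: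
  assumes M: "chd E V M" and S: "S \<in> dsets V E" and x: "x \<in> node_verts V E S"
    and xP: "x \<in> insert (Inr (M, True)) (mverts (modtree M E))"
  shows "S \<subseteq> M"
proof -
  obtain S' where S': "S' \<in> dsets V E" "S' \<subseteq> M" "x \<in> node_verts V E S'" using Pv_iff[OF g M] xP by blast
  have "S = S'" using NV_uniq[OF g S S'(1) x S'(3)] .
  then show ?thesis using S' by simp
qed

lemma D3a:
  assumes M: "chd E V M" and x: "x \<in> mverts (modtree M E)" and y: "y \<in> mverts (modtree M E)"
  shows "(x, y) \<in> mnedges (modtree V E) \<longleftrightarrow> (x, y) \<in> mnedges (modtree M E)"
proof
  assume "(x, y) \<in> mnedges (modtree M E)"
  then obtain S where S: "S \<in> dsets M E" "(x, y) \<in> node_edges M E S" unfolding mnedges_mt by blast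
  have S1: "S \<in> dsets V E" "S \<subseteq> M" using dsetsM[OF g M] S(1) by auto
  have "S \<noteq> V" using S1 chdV[OF g M] by auto
  then have "(x, y) \<in> node_edges V E S" using NEM[OF g _ M] S(2) by blast
  then show "(x, y) \<in> mnedges (modtree V E)" using S1 unfolding mnedges_mt by blast
next
  assume "(x, y) \<in> mnedges (modtree V E)"
  then obtain S where S: "S \<in> dsets V E" "(x, y) \<in> node_edges V E S" unfolding mnedges_mt by blast
  have xs: "x \<in> node_verts V E S" using NE_verts[OF S(2)] by blast
  have SM: "S \<subseteq> M" using loc_sub[OF M S(1) xs] x by blast
  have SV: "S \<noteq> V" using SM chdV[OF g M] by auto
  have "x \<noteq> Inr (M, True)" "y \<noteq> Inr (M, True)" using x y hd_notB[OF g M] by auto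
  then have "(x, y) \<in> node_edges M E S" using NEM[OF g SV M] S(2) by blast
  moreover have "S \<in> dsets M E" using dsetsM[OF g M] S(1) SM by auto
  ultimately show "(x, y) \<in> mnedges (modtree M E)" unfolding mnedges_mt by blast
qed

lemma D3b:
  assumes M: "chd E V M" and y: "y \<in> mverts (modtree M E)"
  shows "(Inr (M, True), y) \<in> mnedges (modtree V E) \<longleftrightarrow> y \<in> node_verts M E M"
    and "(y, Inr (M, True)) \<in> mnedges (modtree V E) \<longleftrightarrow> y \<in> node_verts M E M"
proof -
  have Mp: "M \<noteq> V" "M \<in> dsets V E" using chdV[OF g M] by auto
  have yh: "y \<noteq> Inr (M, True)" using y hd_notB[OF g M] by auto
  have nv: "y \<in> node_verts M E M \<longleftrightarrow> y \<in> node_verts V E M" using NVM[OF g Mp(1) M] yh by blast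
  have e1: "(Inr (M, True), y) \<in> mnedges (modtree V E) \<longleftrightarrow> (Inr (M, True), y) \<in> node_edges V E M"
  proof
    assume "(Inr (M, True), y) \<in> mnedges (modtree V E)"
    then obtain S where S: "S \<in> dsets V E" "(Inr (M, True), y) \<in> node_edges V E S" unfolding mnedges_mt by blast
    have "Inr (M, True) \<in> node_verts V E S" using NE_verts[OF S(2)] by blast
    then have "S = M" by (simp add: NV_True)
    then show "(Inr (M, True), y) \<in> node_edges V E M" using S by simp
  next
    assume "(Inr (M, True), y) \<in> node_edges V E M"
    then show "(Inr (M, True), y) \<in> mnedges (modtree V E)" using Mp unfolding mnedges_mt by blast
  qed
  have e2: "(y, Inr (M, True)) \<in> mnedges (modtree V E) \<longleftrightarrow> (y, Inr (M, True)) \<in> node_edges V E M"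
  proof
    assume "(y, Inr (M, True)) \<in> mnedges (modtree V E)"
    then obtain S where S: "S \<in> dsets V E" "(y, Inr (M, True)) \<in> node_edges V E S" unfolding mnedges_mt by blast
    have "Inr (M, True) \<in> node_verts V E S" using NE_verts[OF S(2)] by blast
    then have "S = M" by (simp add: NV_True)
    then show "(y, Inr (M, True)) \<in> node_edges V E M" using S by simp
  next
    assume "(y, Inr (M, True)) \<in> node_edges V E M"
    then show "(y, Inr (M, True)) \<in> mnedges (modtree V E)" using Mp unfolding mnedges_mt by blast
  qed
  show "(Inr (M, True), y) \<in> mnedges (modtree V E) \<longleftrightarrow> y \<in> node_verts M E M"
    unfolding e1 NE_head(1) nv using Mp(1) yh by blast
  show "(y, Inr (M, True)) \<in> mnedges (modtree V E) \<longleftrightarrow> y \<in> node_verts M E M"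
    unfolding e2 NE_head(2) nv using Mp(1) yh by blast
qed

lemma D3c:
  assumes e: "(x, y) \<in> mnedges (modtree V E)"
  shows "(x \<in> node_verts V E V \<and> y \<in> node_verts V E V) \<or>
     (\<exists>M. chd E V M \<and> x \<in> insert (Inr (M, True)) (mverts (modtree M E)) \<and> y \<in> insert (Inr (M, True)) (mverts (modtree M E)))"
proof -
  obtain S where S: "S \<in> dsets V E" "(x, y) \<in> node_edges V E S" using e unfolding mnedges_mt by blast
  have xy: "x \<in> node_verts V E S" "y \<in> node_verts V E S" using NE_verts[OF S(2)] by auto
  show ?thesis
  proof (cases "S = V")
    case True then show ?thesis using xy by simp
  next
    case False
    have "(chd E)\<^sup>*\<^sup>* V S" using S dsets_eq by blast
    then obtain C where C: "chd E V C" "(chd E)\<^sup>*\<^sup>* C S" using desc_first[OF g] False by blast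
    have "S \<subseteq> C" using desc_props[OF g C(2)] chdV[OF g C(1)] by blast
    then have "x \<in> insert (Inr (C, True)) (mverts (modtree C E))" "y \<in> insert (Inr (C, True)) (mverts (modtree C E))"
      using Pv_iff[OF g C(1)] S(1) xy by blast+
    then show ?thesis using C(1) by blast
  qed
qed

lemma D3d: "(Inr (M, True), Inr (M, True)) \<notin> mnedges (modtree V E)"
proof
  assume "(Inr (M, True), Inr (M, True)) \<in> mnedges (modtree V E)"
  then obtain S where S: "S \<in> dsets V E" "(Inr (M, True), Inr (M, True)) \<in> node_edges V E S" unfolding mnedges_mt by blast
  have "Inr (M, True) \<in> node_verts V E S" using NE_verts[OF S(2)] by blast
  then have "S = M" by (simp add: NV_True)
  then show False using S(2) NE_head(1)[of M "Inr (M, True)" V E] by simp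
qed

lemma D4a:
  assumes M: "chd E V M" and x: "x \<in> mverts (modtree M E)" and y: "y \<in> mverts (modtree M E)"
  shows "(x, y) \<in> mtedges (modtree V E) \<longleftrightarrow> (x, y) \<in> mtedges (modtree M E)"
proof
  assume "(x, y) \<in> mtedges (modtree M E)"
  then obtain K where K: "x = Inr (K, False)" "y = Inr (K, True)" "K \<in> dsets M E" "K \<noteq> M"
    unfolding mtedges_mt by blast
  have "K \<in> dsets V E" "K \<subseteq> M" using dsetsM[OF g M] K(3) by auto
  moreover then have "K \<noteq> V" using chdV[OF g M] by auto
  ultimately show "(x, y) \<in> mtedges (modtree V E)" unfolding mtedges_mt using K by blast
next
  assume "(x, y) \<in> mtedges (modtree V E)"
  then obtain K where K: "x = Inr (K, False)" "y = Inr (K, True)" "K \<in> dsets V E" "K \<noteq> V"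
    unfolding mtedges_mt by blast
  have yK: "y \<in> node_verts V E K" using K by (simp add: NV_True)
  have "K \<subseteq> M" using loc_sub[OF M K(3) yK] y by blast
  then have "K \<in> dsets M E" using dsetsM[OF g M] K(3) by auto
  moreover have "K \<noteq> M" using y K(2) hd_notB[OF g M] by auto
  ultimately show "(x, y) \<in> mtedges (modtree M E)" unfolding mtedges_mt using K by blast
qed

lemma D4b: "chd E V M \<Longrightarrow> (Inr (M, False), Inr (M, True)) \<in> mtedges (modtree V E)"
  unfolding mtedges_mt using chdV[OF g] by blast

lemma D4c:
  assumes e: "(x, y) \<in> mtedges (modtree V E)"
  shows "(\<exists>M. chd E V M \<and> x = Inr (M, False) \<and> y = Inr (M, True)) \<or>
    (\<exists>M. chd E V M \<and> x \<in> mverts (modtree M E) \<and> y \<in> mverts (modtree M E))"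
proof -
  obtain K where K: "x = Inr (K, False)" "y = Inr (K, True)" "K \<in> dsets V E" "K \<noteq> V"
    using e unfolding mtedges_mt by blast
  have "(chd E)\<^sup>*\<^sup>* V K" using K dsets_eq by blast
  then obtain C where C: "chd E V C" "(chd E)\<^sup>*\<^sup>* C K" using desc_first[OF g] K(4) by blast
  show ?thesis
  proof (cases "K = C")
    case True then show ?thesis using C K by blast
  next
    case False
    have fC: "fin_graph C E" using chdV[OF g C(1)] by blast
    have "K \<in> dsets C E" using C(2) dsets_eq by blast
    then have "(x, y) \<in> mtedges (modtree C E)" unfolding mtedges_mt using K False by blast
    then have "x \<in> mverts (modtree C E) \<and> y \<in> mverts (modtree C E)" using wft_te[OF fC] by blast
    then show ?thesis using C(1) by blast
  qed
qed

lemma D5: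
  assumes M: "chd E V M" and x: "x \<in> mverts (modtree M E)"
  shows "x \<in> Inl ` V \<longleftrightarrow> x \<in> Inl ` M"
proof
  assume "x \<in> Inl ` V"
  then obtain z where z: "x = Inl z" by blast
  obtain S where S: "S \<in> dsets M E" "x \<in> node_verts M E S" using x unfolding mverts_mt by blast
  have "z \<in> S" using S(2) z by (simp add: NV_Inl)
  moreover have "S \<subseteq> M" using dsetsM[OF g M] S(1) by auto
  ultimately show "x \<in> Inl ` M" using z by blast
next
  assume "x \<in> Inl ` M" then show "x \<in> Inl ` V" using chdV[OF g M] by blast
qed

lemma hd_head: "chd E V M \<Longrightarrow> Inr (M, True) \<in> heads (modtree V E)"
  unfolding heads_def using D4b by blast

lemma reach_sub:
  assumes M: "chd E V M" and r: "(step (modtree V E))\<^sup>*\<^sup>* (Inr (M, True)) y"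
  shows "y \<in> insert (Inr (M, True)) (mverts (modtree M E))"
  using r
proof (induction rule: rtranclp_induct)
  case base then show ?case by simp
next
  case (step y z)
  let ?P = "\<lambda>M. insert (Inr (M, True)) (mverts (modtree M E))"
  have Mv: "Inr (M, False) \<in> node_verts V E V" using M by (simp add: NV_False)
  show ?case
  proof (cases "(y, z) \<in> mtedges (modtree V E)")
    case True
    then consider (a) M' where "chd E V M'" "y = Inr (M', False)" "z = Inr (M', True)"
      | (b) M' where "chd E V M'" "y \<in> mverts (modtree M' E)" "z \<in> mverts (modtree M' E)"
      using D4c by blast
    then show ?thesis
    proof cases
      case a
      then have "y \<in> node_verts V E V" by (simp add: NV_False)
      then show ?thesis using disjN[OF g M] step.IH by blast
    next
      case b
      then have "M' = M" using disjP[OF g M b(1)] step.IH by blast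
      then show ?thesis using b by simp
    qed
  next
    case False
    then have e: "(y, z) \<in> mnedges (modtree V E)" using step.hyps(2) unfolding step_def by blast
    consider (a) "y \<in> node_verts V E V \<and> z \<in> node_verts V E V"
      | (b) M' where "chd E V M'" "y \<in> ?P M'" "z \<in> ?P M'"
      using D3c[OF e] by blast
    then show ?thesis
    proof cases
      case a
      then show ?thesis using disjN[OF g M] step.IH by blast
    next
      case b
      then have "M' = M" using disjP[OF g M b(1)] step.IH by blast
      then show ?thesis using b by simp
    qed
  qed
qed

lemma reach_sup:
  assumes M: "chd E V M" and y: "y \<in> insert (Inr (M, True)) (mverts (modtree M E))"
  shows "(step (modtree V E))\<^sup>*\<^sup>* (Inr (M, True)) y"
proof -
  obtain S where S: "S \<in> dsets V E" "S \<subseteq> M" "y \<in> node_verts V E S" using Pv_iff[OF g M] y by blast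
  have Md: "M \<in> dsets V E" "M \<noteq> V" "M \<subseteq> V" using chdV[OF g M] by auto
  have "S \<noteq> {}" using dsets_ne[OF g S(1)] S(2) Md by auto
  then have d: "(chd E)\<^sup>*\<^sup>* M S" using desc_iff_sub[OF g Md(1) S(1)] S(2) by blast
  have main: "\<And>w. w \<in> node_verts V E S \<Longrightarrow> (step (modtree V E))\<^sup>*\<^sup>* (Inr (M, True)) w"
    using d S(2)
  proof (induction arbitrary: rule: rtranclp_induct)
    case base
    show ?case
    proof (cases "w = Inr (M, True)")
      case True then show ?thesis by simp
    next
      case False
      then have "(Inr (M, True), w) \<in> node_edges V E M" using base Md(2) NE_head(1) by blast
      then have "(Inr (M, True), w) \<in> mnedges (modtree V E)" using Md(1) unfolding mnedges_mt by blast
      then have "step (modtree V E) (Inr (M, True)) w" using hd_head[OF M] unfolding step_def by blast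
      then show ?thesis by blast
    qed
  next
    case (step S0 S1)
    have S0d: "S0 \<in> dsets M E" using step.hyps(1) dsets_eq by blast
    then have S0V: "S0 \<in> dsets V E" using dsetsM[OF g M] by blast
    have S1d: "S1 \<in> dsets V E" using chd_props[OF g S0V step.hyps(2)] by blast
    have "S1 \<subseteq> S0" using chd_props[OF g S0V step.hyps(2)] by blast
    have S1V: "S1 \<noteq> V" using step.prems(2) Md by auto
    have mk: "Inr (S1, False) \<in> node_verts V E S0" using step.hyps(2) by (simp add: NV_False)
    have S0M: "S0 \<subseteq> M" using dsetsM[OF g M] S0d by blast
    have r1: "(step (modtree V E))\<^sup>*\<^sup>* (Inr (M, True)) (Inr (S1, False))" using step.IH[OF mk S0M] .
    have te: "(Inr (S1, False), Inr (S1, True)) \<in> mtedges (modtree V E)" unfolding mtedges_mt using S1d S1V by blast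
    then have "step (modtree V E) (Inr (S1, False)) (Inr (S1, True))" unfolding step_def by blast
    then have r2: "(step (modtree V E))\<^sup>*\<^sup>* (Inr (M, True)) (Inr (S1, True))"
      using r1 by (meson rtranclp.rtrancl_into_rtrancl)
    show ?case
    proof (cases "w = Inr (S1, True)")
      case True then show ?thesis using r2 by simp
    next
      case False
      then have "(Inr (S1, True), w) \<in> node_edges V E S1" using step.prems(1) S1V NE_head(1) by blast
      then have "(Inr (S1, True), w) \<in> mnedges (modtree V E)" using S1d unfolding mnedges_mt by blast
      moreover have "Inr (S1, True) \<in> heads (modtree V E)" using te unfolding heads_def by blast
      ultimately have "step (modtree V E) (Inr (S1, True)) w" unfolding step_def by blast
      then show ?thesis using r2 by (meson rtranclp.rtrancl_into_rtrancl)
    qed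
  qed
  show ?thesis using main S(3) .
qed

lemma reach_eq: "chd E V M \<Longrightarrow> {y. (step (modtree V E))\<^sup>*\<^sup>* (Inr (M, True)) y} = insert (Inr (M, True)) (mverts (modtree M E))"
  using reach_sub reach_sup by blast

end


definition BV :: "('a \<Rightarrow> 'a \<Rightarrow> bool) \<Rightarrow> 'a mvert \<Rightarrow> 'a mvert set" where
  "BV E u = mverts (subtree E u)"

definition PV :: "('a \<Rightarrow> 'a \<Rightarrow> bool) \<Rightarrow> 'a mvert \<Rightarrow> 'a mvert set" where
  "PV E u = insert (hdv u) (BV E u)"

context
  fixes V :: "'a set" and E
  assumes g: "fin_graph V E"
begin

abbreviation "TT \<equiv> modtree V E"
abbreviation "NN \<equiv> node_verts V E V"
abbreviation "RR \<equiv> root_markers V E"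

lemma R_chd: "u \<in> RR \<Longrightarrow> chd E V (marker_set u) \<and> u = Inr (marker_set u, False)"
  using rm_iff[OF g] by fastforce

lemma R_eqI: "u \<in> RR \<Longrightarrow> u' \<in> RR \<Longrightarrow> marker_set u = marker_set u' \<Longrightarrow> u = u'"
  using R_chd by metis

lemma hdv_inj: "u \<in> RR \<Longrightarrow> u' \<in> RR \<Longrightarrow> hdv u = hdv u' \<Longrightarrow> u = u'"
  unfolding hdv_def using R_eqI by blast

lemma R_N: "u \<in> RR \<Longrightarrow> u \<in> NN"
  unfolding root_markers_def root_node_def by blast

lemma R_iff_N: "u \<in> RR \<longleftrightarrow> u \<in> NN \<and> u \<notin> Inl ` V"
  unfolding root_markers_def root_node_def mnormal_mt by blast

lemma N_sub: "x \<in> NN \<Longrightarrow> x \<in> mverts TT"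
  unfolding mverts_mt using Vd[OF g] by blast

lemma BV_eq: "u \<in> RR \<Longrightarrow> BV E u = mverts (modtree (marker_set u) E)"
  unfolding BV_def subtree_def by simp

lemma PV_eq: "u \<in> RR \<Longrightarrow> PV E u = insert (Inr (marker_set u, True)) (mverts (modtree (marker_set u) E))"
  unfolding PV_def BV_def subtree_def hdv_def by simp

lemma PV_sub: "u \<in> RR \<Longrightarrow> x \<in> PV E u \<Longrightarrow> x \<in> mverts TT"
proof -
  assume u: "u \<in> RR" and x: "x \<in> PV E u"
  obtain S where "S \<in> dsets V E" "x \<in> node_verts V E S"
    using Pv_iff[OF g, of "marker_set u" x] R_chd[OF u] x PV_eq[OF u] by blast
  then show ?thesis unfolding mverts_mt by blast
qed

lemma BV_PV: "x \<in> BV E u \<Longrightarrow> x \<in> PV E u"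
  unfolding PV_def by simp

lemma hd_PV: "hdv u \<in> PV E u"
  unfolding PV_def by simp

lemma BV_sub: "u \<in> RR \<Longrightarrow> x \<in> BV E u \<Longrightarrow> x \<in> mverts TT"
  using PV_sub BV_PV by blast

lemma G_cover: "x \<in> mverts TT \<Longrightarrow> x \<in> NN \<or> (\<exists>u\<in>RR. x = hdv u) \<or> (\<exists>u\<in>RR. x \<in> BV E u)"
proof -
  assume x: "x \<in> mverts TT"
  show ?thesis
  proof (cases "x \<in> NN")
    case True then show ?thesis by blast
  next
    case False
    then obtain M where M: "chd E V M" "x \<in> insert (Inr (M, True)) (mverts (modtree M E))"
      using cover[OF g x] by blast
    have u: "Inr (M, False) \<in> RR" using rm_iff[OF g] M(1) by blast
    have "x = hdv (Inr (M, False)) \<or> x \<in> BV E (Inr (M, False))"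
      using M(2) unfolding hdv_def BV_def subtree_def by simp
    then show ?thesis using u by blast
  qed
qed

lemma G_disjN: "u \<in> RR \<Longrightarrow> x \<in> NN \<Longrightarrow> x \<notin> PV E u"
  using disjN[OF g] R_chd PV_eq by metis

lemma G_disjP: "u \<in> RR \<Longrightarrow> u' \<in> RR \<Longrightarrow> x \<in> PV E u \<Longrightarrow> x \<in> PV E u' \<Longrightarrow> u = u'"
proof -
  assume u: "u \<in> RR" and u': "u' \<in> RR" and x: "x \<in> PV E u" "x \<in> PV E u'"
  have "marker_set u = marker_set u'"
    using disjP[OF g] R_chd[OF u] R_chd[OF u'] x PV_eq[OF u] PV_eq[OF u'] by metis
  then show ?thesis using R_eqI u u' by blast
qed

lemma G_hdB: "u \<in> RR \<Longrightarrow> hdv u \<notin> BV E u"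
  using hd_notB[OF g] R_chd BV_eq unfolding hdv_def by metis

lemma hd_notInl: "hdv u \<notin> Inl ` V"
  unfolding hdv_def by auto

lemma hd_notN: "u \<in> RR \<Longrightarrow> hdv u \<notin> NN"
  using G_disjN hd_PV by blast

lemma BV_notN: "u \<in> RR \<Longrightarrow> x \<in> BV E u \<Longrightarrow> x \<notin> NN"
  using G_disjN BV_PV by blast

lemma fg_sub: "u \<in> RR \<Longrightarrow> fin_graph (marker_set u) E"
  using chdV[OF g] R_chd by blast

lemma wft_sub: "u \<in> RR \<Longrightarrow> wft (subtree E u)"
  unfolding subtree_def using wft_mt fg_sub by blast

lemma wft_T: "wft TT"
  using wft_mt[OF g] .

lemma root_sub: "u \<in> RR \<Longrightarrow> rootprop (subtree E u) x \<longleftrightarrow> x \<in> node_verts (marker_set u) E (marker_set u)"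
  unfolding subtree_def using root_char fg_sub by blast

lemma root_T: "rootprop TT x \<longleftrightarrow> x \<in> NN"
  using root_char[OF g] .

lemma G_D3a: "u \<in> RR \<Longrightarrow> x \<in> BV E u \<Longrightarrow> y \<in> BV E u \<Longrightarrow>
   (x, y) \<in> mnedges TT \<longleftrightarrow> (x, y) \<in> mnedges (subtree E u)"
  unfolding subtree_def using D3a[OF g] R_chd BV_eq by metis

lemma G_D3b: "u \<in> RR \<Longrightarrow> y \<in> BV E u \<Longrightarrow>
   ((hdv u, y) \<in> mnedges TT \<longleftrightarrow> rootprop (subtree E u) y) \<and> ((y, hdv u) \<in> mnedges TT \<longleftrightarrow> rootprop (subtree E u) y)"
proof -
  assume u: "u \<in> RR" and y: "y \<in> BV E u"
  have c: "chd E V (marker_set u)" using R_chd[OF u] by blast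
  have y': "y \<in> mverts (modtree (marker_set u) E)" using y BV_eq[OF u] by simp
  show ?thesis unfolding root_sub[OF u] hdv_def using D3b[OF g c y'] by blast
qed

lemma G_D3d: "(hdv u, hdv u) \<notin> mnedges TT"
  unfolding hdv_def using D3d[OF g] .

lemma G_noedgeN: "x \<in> NN \<Longrightarrow> y \<in> mverts TT \<Longrightarrow> y \<notin> NN \<Longrightarrow> (x, y) \<notin> mnedges TT \<and> (y, x) \<notin> mnedges TT"
proof -
  assume x: "x \<in> NN" and y: "y \<in> mverts TT" "y \<notin> NN"
  have "(x, y) \<notin> mnedges TT"
  proof
    assume "(x, y) \<in> mnedges TT"
    then consider "x \<in> NN \<and> y \<in> NN" | M where "chd E V M" "x \<in> insert (Inr (M, True)) (mverts (modtree M E))"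
      using D3c[OF g] by blast
    then show False
    proof cases
      case 1 then show False using y by blast
    next
      case 2 then show False using disjN[OF g] x by blast
    qed
  qed
  moreover have "(y, x) \<notin> mnedges TT"
  proof
    assume "(y, x) \<in> mnedges TT"
    then consider "y \<in> NN \<and> x \<in> NN" | M where "chd E V M" "x \<in> insert (Inr (M, True)) (mverts (modtree M E))"
      using D3c[OF g] by blast
    then show False
    proof cases
      case 1 then show False using y by blast
    next
      case 2 then show False using disjN[OF g] x by blast
    qed
  qed
  ultimately show ?thesis by blast
qed

lemma G_noedgeP: "u \<in> RR \<Longrightarrow> u' \<in> RR \<Longrightarrow> u \<noteq> u' \<Longrightarrow> x \<in> PV E u \<Longrightarrow> y \<in> PV E u' \<Longrightarrow> (x, y) \<notin> mnedges TT"
proof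
  assume u: "u \<in> RR" and u': "u' \<in> RR" and ne: "u \<noteq> u'" and x: "x \<in> PV E u" and y: "y \<in> PV E u'"
    and e: "(x, y) \<in> mnedges TT"
  consider "x \<in> NN \<and> y \<in> NN" | M where "chd E V M" "x \<in> insert (Inr (M, True)) (mverts (modtree M E))"
      "y \<in> insert (Inr (M, True)) (mverts (modtree M E))"
    using D3c[OF g e] by blast
  then show False
  proof cases
    case 1 then show False using G_disjN u x by blast
  next
    case 2
    have w: "Inr (M, False) \<in> RR" using rm_iff[OF g] 2(1) by blast
    have "x \<in> PV E (Inr (M, False))" "y \<in> PV E (Inr (M, False))" using 2 PV_eq[OF w] by auto
    then show False using G_disjP[OF u w x] G_disjP[OF u' w y] ne by simp
  qed
qed

lemma G_TE: "(x, y) \<in> mtedges TT \<longleftrightarrow> (x \<in> RR \<and> y = hdv x) \<or> (\<exists>u\<in>RR. x \<in> BV E u \<and> y \<in> BV E u \<and> (x, y) \<in> mtedges (subtree E u))"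
proof
  assume e: "(x, y) \<in> mtedges TT"
  consider (a) M where "chd E V M" "x = Inr (M, False)" "y = Inr (M, True)"
    | (b) M where "chd E V M" "x \<in> mverts (modtree M E)" "y \<in> mverts (modtree M E)"
    using D4c[OF g e] by blast
  then show "(x \<in> RR \<and> y = hdv x) \<or> (\<exists>u\<in>RR. x \<in> BV E u \<and> y \<in> BV E u \<and> (x, y) \<in> mtedges (subtree E u))"
  proof cases
    case a
    then have "x \<in> RR" using rm_iff[OF g] by blast
    then show ?thesis using a unfolding hdv_def by simp
  next
    case b
    have w: "Inr (M, False) \<in> RR" using rm_iff[OF g] b(1) by blast
    have "(x, y) \<in> mtedges (modtree M E)" using D4a[OF g b(1) b(2) b(3)] e by blast
    then have "x \<in> BV E (Inr (M, False)) \<and> y \<in> BV E (Inr (M, False)) \<and> (x, y) \<in> mtedges (subtree E (Inr (M, False)))"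
      using b unfolding BV_def subtree_def by simp
    then show ?thesis using w by blast
  qed
next
  assume "(x \<in> RR \<and> y = hdv x) \<or> (\<exists>u\<in>RR. x \<in> BV E u \<and> y \<in> BV E u \<and> (x, y) \<in> mtedges (subtree E u))"
  then show "(x, y) \<in> mtedges TT"
  proof
    assume a: "x \<in> RR \<and> y = hdv x"
    then show ?thesis using D4b[OF g] R_chd unfolding hdv_def by metis
  next
    assume "\<exists>u\<in>RR. x \<in> BV E u \<and> y \<in> BV E u \<and> (x, y) \<in> mtedges (subtree E u)"
    then obtain u where u: "u \<in> RR" "x \<in> BV E u" "y \<in> BV E u" "(x, y) \<in> mtedges (subtree E u)" by blast
    have c: "chd E V (marker_set u)" using R_chd u by blast
    show ?thesis using D4a[OF g c] u BV_eq[OF u(1)] unfolding subtree_def by auto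
  qed
qed

lemma G_D5: "u \<in> RR \<Longrightarrow> x \<in> BV E u \<Longrightarrow> x \<in> mnormal TT \<longleftrightarrow> x \<in> mnormal (subtree E u)"
  unfolding subtree_def mnormal_mt using D5[OF g] R_chd BV_eq by metis

lemma G_reach: "u \<in> RR \<Longrightarrow> {y. (step TT)\<^sup>*\<^sup>* (hdv u) y} = PV E u"
  unfolding hdv_def using reach_eq[OF g] R_chd PV_eq by metis

end


context
  fixes V :: "'a set" and E
  assumes g: "fin_graph V E"
begin

lemma G_D4a: "u \<in> (root_markers V E) \<Longrightarrow> x \<in> BV E u \<Longrightarrow> y \<in> BV E u \<Longrightarrow>
   (x, y) \<in> mtedges (modtree V E) \<longleftrightarrow> (x, y) \<in> mtedges (subtree E u)"
  unfolding subtree_def using D4a[OF g] R_chd[OF g] BV_eq[OF g] by metis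

lemma PV_cases: "x \<in> PV E u \<Longrightarrow> x = hdv u \<or> x \<in> BV E u"
  unfolding PV_def by blast

lemma glue_isom:
  assumes bN: "bij_betw f (node_verts V E V) (node_verts V E V)"
   and nN: "\<forall>x\<in>(node_verts V E V). x \<in> Inl ` V \<longleftrightarrow> f x \<in> Inl ` V"
   and eN: "\<forall>x\<in>(node_verts V E V). \<forall>y\<in>(node_verts V E V). (x, y) \<in> mnedges (modtree V E) \<longleftrightarrow> (f x, f y) \<in> mnedges (modtree V E)"
   and hH: "\<forall>u\<in>(root_markers V E). f (hdv u) = hdv (f u)"
   and iB: "\<forall>u\<in>(root_markers V E). mt_isom (subtree E u) (subtree E (f u)) f"
  shows "mt_isom (modtree V E) (modtree V E) f"
proof -
  have fN: "\<And>x. x \<in> (node_verts V E V) \<Longrightarrow> f x \<in> (node_verts V E V)" using bN bij_betwE by blast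
  have injN: "inj_on f (node_verts V E V)" using bN unfolding bij_betw_def by blast
  have fR: "\<And>u. u \<in> (root_markers V E) \<Longrightarrow> f u \<in> (root_markers V E)"
  proof -
    fix u assume u: "u \<in> (root_markers V E)"
    then have a: "u \<in> (node_verts V E V)" "u \<notin> Inl ` V" using R_iff_N[OF g, of u] by auto
    then have "f u \<in> (node_verts V E V)" "f u \<notin> Inl ` V" using fN nN by auto
    then show "f u \<in> (root_markers V E)" using R_iff_N[OF g, of "f u"] by simp
  qed
  have isoU: "\<And>u. u \<in> (root_markers V E) \<Longrightarrow> mt_isom (subtree E u) (subtree E (f u)) f" using iB by blast
  have injR: "\<And>u u'. u \<in> (root_markers V E) \<Longrightarrow> u' \<in> (root_markers V E) \<Longrightarrow> f u = f u' \<Longrightarrow> u = u'"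
  proof -
    fix u u' assume "u \<in> (root_markers V E)" "u' \<in> (root_markers V E)" "f u = f u'"
    then show "u = u'" using inj_onD[OF injN] R_N[OF g] by blast
  qed
  have bijB: "\<And>u. u \<in> (root_markers V E) \<Longrightarrow> bij_betw f (BV E u) (BV E (f u))"
    using isoU unfolding BV_def mt_isom_def by blast
  have fB: "\<And>u x. u \<in> (root_markers V E) \<Longrightarrow> x \<in> BV E u \<Longrightarrow> f x \<in> BV E (f u)"
    using bijB bij_betwE by blast
  have imB: "\<And>u. u \<in> (root_markers V E) \<Longrightarrow> f ` BV E u = BV E (f u)"
    using bijB bij_betw_imp_surj_on by blast
  have injB: "\<And>u. u \<in> (root_markers V E) \<Longrightarrow> inj_on f (BV E u)"
    using bijB bij_betw_imp_inj_on by blast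
  have fP: "\<And>u x. u \<in> (root_markers V E) \<Longrightarrow> x \<in> PV E u \<Longrightarrow> f x \<in> PV E (f u)"
  proof -
    fix u x assume u: "u \<in> (root_markers V E)" and x: "x \<in> PV E u"
    then consider "x = hdv u" | "x \<in> BV E u" using PV_cases by blast
    then show "f x \<in> PV E (f u)"
    proof cases
      case 1 then show ?thesis using hH u hd_PV[OF g] by simp
    next
      case 2 then show ?thesis using fB u BV_PV[OF g] by blast
    qed
  qed
  have fT: "\<And>x. x \<in> mverts (modtree V E) \<Longrightarrow> f x \<in> mverts (modtree V E)"
  proof -
    fix x assume x: "x \<in> mverts (modtree V E)"
    consider "x \<in> (node_verts V E V)" | u where "u \<in> (root_markers V E)" "x \<in> PV E u" using G_cover[OF g x] hd_PV[OF g] BV_PV[OF g] by blast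
    then show "f x \<in> mverts (modtree V E)"
    proof cases
      case 1 then show ?thesis using fN N_sub[OF g] by blast
    next
      case 2 then show ?thesis using fP fR PV_sub[OF g] by blast
    qed
  qed
  have Rf1: "\<And>x. x \<in> mverts (modtree V E) \<Longrightarrow> f x \<in> (node_verts V E V) \<Longrightarrow> x \<in> (node_verts V E V)"
  proof (rule ccontr)
    fix x assume x: "x \<in> mverts (modtree V E)" "f x \<in> (node_verts V E V)" "x \<notin> (node_verts V E V)"
    then obtain u where u: "u \<in> (root_markers V E)" "x \<in> PV E u" using G_cover[OF g x(1)] hd_PV[OF g] BV_PV[OF g] by blast
    then have "f x \<in> PV E (f u)" using fP by blast
    then show False using G_disjN[OF g fR[OF u(1)] x(2)] by blast
  qed
  have Rf4: "\<And>x u'. x \<in> mverts (modtree V E) \<Longrightarrow> u' \<in> (root_markers V E) \<Longrightarrow> f x \<in> PV E u' \<Longrightarrow> \<exists>u\<in>(root_markers V E). x \<in> PV E u \<and> f u = u'"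
  proof -
    fix x u' assume x: "x \<in> mverts (modtree V E)" and u': "u' \<in> (root_markers V E)" and fx: "f x \<in> PV E u'"
    have "x \<notin> (node_verts V E V)"
    proof
      assume "x \<in> (node_verts V E V)" then have "f x \<in> (node_verts V E V)" using fN by blast
      then show False using G_disjN[OF g u'] fx by blast
    qed
    then obtain u where u: "u \<in> (root_markers V E)" "x \<in> PV E u" using G_cover[OF g x] hd_PV[OF g] BV_PV[OF g] by blast
    then have "f x \<in> PV E (f u)" using fP by blast
    then have "f u = u'" using G_disjP[OF g fR[OF u(1)] u'] fx by blast
    then show "\<exists>u\<in>(root_markers V E). x \<in> PV E u \<and> f u = u'" using u by blast
  qed
  have Rf2: "\<And>x u'. x \<in> mverts (modtree V E) \<Longrightarrow> u' \<in> (root_markers V E) \<Longrightarrow> f x = hdv u' \<Longrightarrow> \<exists>u\<in>(root_markers V E). x = hdv u \<and> f u = u'"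
  proof -
    fix x u' assume x: "x \<in> mverts (modtree V E)" and u': "u' \<in> (root_markers V E)" and fx: "f x = hdv u'"
    obtain u where u: "u \<in> (root_markers V E)" "x \<in> PV E u" "f u = u'" using Rf4[OF x u'] fx hd_PV[OF g] by metis
    have "x = hdv u"
    proof (rule ccontr)
      assume "x \<noteq> hdv u"
      then have "x \<in> BV E u" using u(2) PV_cases by blast
      then have "f x \<in> BV E u'" using fB u by blast
      then show False using fx G_hdB[OF g u'] by simp
    qed
    then show "\<exists>u\<in>(root_markers V E). x = hdv u \<and> f u = u'" using u by blast
  qed
  have Rf3: "\<And>x u'. x \<in> mverts (modtree V E) \<Longrightarrow> u' \<in> (root_markers V E) \<Longrightarrow> f x \<in> BV E u' \<Longrightarrow> \<exists>u\<in>(root_markers V E). x \<in> BV E u \<and> f u = u'"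
  proof -
    fix x u' assume x: "x \<in> mverts (modtree V E)" and u': "u' \<in> (root_markers V E)" and fx: "f x \<in> BV E u'"
    obtain u where u: "u \<in> (root_markers V E)" "x \<in> PV E u" "f u = u'" using Rf4[OF x u'] fx BV_PV[OF g] by metis
    have "x \<in> BV E u"
    proof (rule ccontr)
      assume "x \<notin> BV E u"
      then have "x = hdv u" using u(2) PV_cases by blast
      then have "f x = hdv u'" using hH u by simp
      then show False using fx G_hdB[OF g u'] by simp
    qed
    then show "\<exists>u\<in>(root_markers V E). x \<in> BV E u \<and> f u = u'" using u by blast
  qed
  have inj: "inj_on f (mverts (modtree V E))"
  proof (rule inj_onI)
    fix x y assume x: "x \<in> mverts (modtree V E)" and y: "y \<in> mverts (modtree V E)" and eq: "f x = f y"
    consider "x \<in> (node_verts V E V)" | u where "u \<in> (root_markers V E)" "x = hdv u" | u where "u \<in> (root_markers V E)" "x \<in> BV E u"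
      using G_cover[OF g x] by blast
    then show "x = y"
    proof cases
      case 1
      then have "y \<in> (node_verts V E V)" using Rf1[OF y] fN eq by metis
      then show ?thesis using injN 1 eq unfolding inj_on_def by blast
    next
      case 2
      then have "f y = hdv (f u)" using hH eq by simp
      then obtain u2 where "u2 \<in> (root_markers V E)" "y = hdv u2" "f u2 = f u" using Rf2[OF y fR[OF 2(1)]] by blast
      then show ?thesis using injR 2 by metis
    next
      case 3
      then have "f y \<in> BV E (f u)" using fB eq by metis
      then obtain u2 where u2: "u2 \<in> (root_markers V E)" "y \<in> BV E u2" "f u2 = f u" using Rf3[OF y fR[OF 3(1)]] by blast
      then have "u2 = u" using injR 3 by metis
      then show ?thesis using injB[OF 3(1)] 3 u2 eq unfolding inj_on_def by blast
    qed
  qed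
  have surj: "mverts (modtree V E) \<subseteq> f ` mverts (modtree V E)"
  proof
    fix z assume z: "z \<in> mverts (modtree V E)"
    consider "z \<in> (node_verts V E V)" | w where "w \<in> (root_markers V E)" "z = hdv w" | w where "w \<in> (root_markers V E)" "z \<in> BV E w"
      using G_cover[OF g z] by blast
    then show "z \<in> f ` mverts (modtree V E)"
    proof cases
      case 1
      then obtain x where "x \<in> (node_verts V E V)" "z = f x" using bN unfolding bij_betw_def by blast
      then show ?thesis using N_sub[OF g] by blast
    next
      case 2
      have "w \<in> (node_verts V E V)" "w \<notin> Inl ` V" using 2 R_iff_N[OF g] by auto
      then obtain u where u: "u \<in> (node_verts V E V)" "w = f u" using bN unfolding bij_betw_def by blast
      then have "u \<notin> Inl ` V" using nN \<open>w \<notin> Inl ` V\<close> by blast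
      then have uR: "u \<in> (root_markers V E)" using u R_iff_N[OF g] by blast
      then have "z = f (hdv u)" using hH 2 u by simp
      then show ?thesis using PV_sub[OF g uR hd_PV[OF g]] by blast
    next
      case 3
      have "w \<in> (node_verts V E V)" "w \<notin> Inl ` V" using 3 R_iff_N[OF g] by auto
      then obtain u where u: "u \<in> (node_verts V E V)" "w = f u" using bN unfolding bij_betw_def by blast
      then have "u \<notin> Inl ` V" using nN \<open>w \<notin> Inl ` V\<close> by blast
      then have uR: "u \<in> (root_markers V E)" using u R_iff_N[OF g] by blast
      then have "z \<in> f ` BV E u" using imB 3 u by simp
      then show ?thesis using BV_sub[OF g uR] by blast
    qed
  qed
  have bij: "bij_betw f (mverts (modtree V E)) (mverts (modtree V E))"
    unfolding bij_betw_def using inj surj fT by blast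
  have norm: "\<And>x. x \<in> mverts (modtree V E) \<Longrightarrow> x \<in> mnormal (modtree V E) \<longleftrightarrow> f x \<in> mnormal (modtree V E)"
  proof -
    fix x assume x: "x \<in> mverts (modtree V E)"
    consider "x \<in> (node_verts V E V)" | u where "u \<in> (root_markers V E)" "x = hdv u" | u where "u \<in> (root_markers V E)" "x \<in> BV E u"
      using G_cover[OF g x] by blast
    then show "x \<in> mnormal (modtree V E) \<longleftrightarrow> f x \<in> mnormal (modtree V E)"
    proof cases
      case 1 then show ?thesis using nN unfolding mnormal_mt by blast
    next
      case 2 then show ?thesis using hH hd_notInl[OF g] unfolding mnormal_mt by simp
    next
      case 3
      have fx: "f x \<in> BV E (f u)" using fB 3 by blast
      have "x \<in> mnormal (subtree E u) \<longleftrightarrow> f x \<in> mnormal (subtree E (f u))"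
        using iB 3 unfolding mt_isom_def BV_def by blast
      then show ?thesis using G_D5[OF g 3(1) 3(2)] G_D5[OF g fR[OF 3(1)] fx] by blast
    qed
  qed
  have edgeP: "\<And>u x y. u \<in> (root_markers V E) \<Longrightarrow> x \<in> PV E u \<Longrightarrow> y \<in> PV E u \<Longrightarrow>
      (x, y) \<in> mnedges (modtree V E) \<longleftrightarrow> (f x, f y) \<in> mnedges (modtree V E)"
  proof -
    fix u x y assume u: "u \<in> (root_markers V E)" and x: "x \<in> PV E u" and y: "y \<in> PV E u"
    have fu: "f u \<in> (root_markers V E)" using fR u by blast
    have w1: "wft (subtree E u)" "wft (subtree E (f u))" using wft_sub[OF g] u fu by auto
    have iso: "mt_isom (subtree E u) (subtree E (f u)) f" using iB u by blast
    consider "x = hdv u" "y = hdv u" | "x = hdv u" "y \<in> BV E u" | "x \<in> BV E u" "y = hdv u"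
      | "x \<in> BV E u" "y \<in> BV E u" using PV_cases x y by blast
    then show "(x, y) \<in> mnedges (modtree V E) \<longleftrightarrow> (f x, f y) \<in> mnedges (modtree V E)"
    proof cases
      case 1 then show ?thesis using G_D3d[OF g] hH u by simp
    next
      case 2
      have fy: "f y \<in> BV E (f u)" using fB u 2 by blast
      have r: "rootprop (subtree E (f u)) (f y) \<longleftrightarrow> rootprop (subtree E u) y"
        using rootprop_iso[OF w1 iso] 2 unfolding BV_def by blast
      show ?thesis using G_D3b[OF g u 2(2)] G_D3b[OF g fu fy] r 2 hH u by simp
    next
      case 3
      have fx: "f x \<in> BV E (f u)" using fB u 3 by blast
      have r: "rootprop (subtree E (f u)) (f x) \<longleftrightarrow> rootprop (subtree E u) x"
        using rootprop_iso[OF w1 iso] 3 unfolding BV_def by blast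
      show ?thesis using G_D3b[OF g u 3(1)] G_D3b[OF g fu fx] r 3 hH u by simp
    next
      case 4
      have fxy: "f x \<in> BV E (f u)" "f y \<in> BV E (f u)" using fB u 4 by blast+
      have "(x, y) \<in> mnedges (subtree E u) \<longleftrightarrow> (f x, f y) \<in> mnedges (subtree E (f u))"
        using iso 4 unfolding mt_isom_def BV_def by blast
      then show ?thesis using G_D3a[OF g u 4] G_D3a[OF g fu fxy] by blast
    qed
  qed
  have nedge: "\<And>x y. x \<in> mverts (modtree V E) \<Longrightarrow> y \<in> mverts (modtree V E) \<Longrightarrow> (x, y) \<in> mnedges (modtree V E) \<longleftrightarrow> (f x, f y) \<in> mnedges (modtree V E)"
  proof -
    fix x y assume x: "x \<in> mverts (modtree V E)" and y: "y \<in> mverts (modtree V E)"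
    have fx: "f x \<in> mverts (modtree V E)" and fy: "f y \<in> mverts (modtree V E)" using fT x y by auto
    show "(x, y) \<in> mnedges (modtree V E) \<longleftrightarrow> (f x, f y) \<in> mnedges (modtree V E)"
    proof (cases "x \<in> (node_verts V E V)")
      case xN: True
      show ?thesis
      proof (cases "y \<in> (node_verts V E V)")
        case True then show ?thesis using eN xN by blast
      next
        case False
        then have "f y \<notin> (node_verts V E V)" using Rf1 y by blast
        then show ?thesis using G_noedgeN[OF g xN y False] G_noedgeN[OF g fN[OF xN] fy] by blast
      qed
    next
      case xN: False
      show ?thesis
      proof (cases "y \<in> (node_verts V E V)")
        case True
        have "f x \<notin> (node_verts V E V)" using Rf1 x xN by blast
        then show ?thesis using G_noedgeN[OF g True x xN] G_noedgeN[OF g fN[OF True] fx] by blast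
      next
        case False
        obtain u where u: "u \<in> (root_markers V E)" "x \<in> PV E u" using G_cover[OF g x] xN hd_PV[OF g] BV_PV[OF g] by blast
        obtain u' where u': "u' \<in> (root_markers V E)" "y \<in> PV E u'" using G_cover[OF g y] False hd_PV[OF g] BV_PV[OF g] by blast
        show ?thesis
        proof (cases "u = u'")
          case True then show ?thesis using edgeP u u' by blast
        next
          case ne: False
          have "f u \<noteq> f u'" using injR u u' ne by blast
          then show ?thesis using G_noedgeP[OF g u(1) u'(1) ne u(2) u'(2)]
              G_noedgeP[OF g fR[OF u(1)] fR[OF u'(1)] _ fP[OF u] fP[OF u']] by blast
        qed
      qed
    qed
  qed
  have tedge: "\<And>x y. x \<in> mverts (modtree V E) \<Longrightarrow> y \<in> mverts (modtree V E) \<Longrightarrow> (x, y) \<in> mtedges (modtree V E) \<longleftrightarrow> (f x, f y) \<in> mtedges (modtree V E)"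
  proof -
    fix x y assume x: "x \<in> mverts (modtree V E)" and y: "y \<in> mverts (modtree V E)"
    have A: "(x \<in> (root_markers V E) \<and> y = hdv x) \<longleftrightarrow> (f x \<in> (root_markers V E) \<and> f y = hdv (f x))"
    proof
      assume "x \<in> (root_markers V E) \<and> y = hdv x" then show "f x \<in> (root_markers V E) \<and> f y = hdv (f x)" using fR hH by simp
    next
      assume a: "f x \<in> (root_markers V E) \<and> f y = hdv (f x)"
      then have "x \<in> (node_verts V E V)" using Rf1 x R_N[OF g] by blast
      moreover have "x \<notin> Inl ` V"
      proof
        assume "x \<in> Inl ` V" then have "f x \<in> Inl ` V" using nN \<open>x \<in> (node_verts V E V)\<close> by blast
        then show False using a R_iff_N[OF g] by blast
      qed
      ultimately have xR: "x \<in> (root_markers V E)" using R_iff_N[OF g] by blast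
      obtain u where u: "u \<in> (root_markers V E)" "y = hdv u" "f u = f x" using Rf2[OF y] a by blast
      then have "u = x" using injR xR by blast
      then show "x \<in> (root_markers V E) \<and> y = hdv x" using xR u by simp
    qed
    have B: "(\<exists>u\<in>(root_markers V E). x \<in> BV E u \<and> y \<in> BV E u \<and> (x, y) \<in> mtedges (subtree E u)) \<longleftrightarrow>
        (\<exists>u\<in>(root_markers V E). f x \<in> BV E u \<and> f y \<in> BV E u \<and> (f x, f y) \<in> mtedges (subtree E u))"
    proof
      assume "\<exists>u\<in>(root_markers V E). x \<in> BV E u \<and> y \<in> BV E u \<and> (x, y) \<in> mtedges (subtree E u)"
      then obtain u where u: "u \<in> (root_markers V E)" "x \<in> BV E u" "y \<in> BV E u" "(x, y) \<in> mtedges (subtree E u)" by blast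
      have "(f x, f y) \<in> mtedges (subtree E (f u))" using iB u unfolding mt_isom_def BV_def by blast
      then show "\<exists>u\<in>(root_markers V E). f x \<in> BV E u \<and> f y \<in> BV E u \<and> (f x, f y) \<in> mtedges (subtree E u)"
        using u fB fR by blast
    next
      assume "\<exists>u\<in>(root_markers V E). f x \<in> BV E u \<and> f y \<in> BV E u \<and> (f x, f y) \<in> mtedges (subtree E u)"
      then obtain u' where u': "u' \<in> (root_markers V E)" "f x \<in> BV E u'" "f y \<in> BV E u'" "(f x, f y) \<in> mtedges (subtree E u')" by blast
      obtain u where u: "u \<in> (root_markers V E)" "x \<in> BV E u" "f u = u'" using Rf3[OF x u'(1,2)] by blast
      obtain u2 where u2: "u2 \<in> (root_markers V E)" "y \<in> BV E u2" "f u2 = u'" using Rf3[OF y u'(1,3)] by blast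
      have "u2 = u" using injR u u2 by metis
      then have yu: "y \<in> BV E u" using u2 by simp
      have "(x, y) \<in> mtedges (subtree E u)" using iB u yu u' unfolding mt_isom_def BV_def by blast
      then show "\<exists>u\<in>(root_markers V E). x \<in> BV E u \<and> y \<in> BV E u \<and> (x, y) \<in> mtedges (subtree E u)" using u yu by blast
    qed
    show "(x, y) \<in> mtedges (modtree V E) \<longleftrightarrow> (f x, f y) \<in> mtedges (modtree V E)"
      unfolding G_TE[OF g, of x y] G_TE[OF g, of "f x" "f y"] using A B by blast
  qed
  show ?thesis unfolding mt_isom_def using bij norm nedge tedge by blast
qed

end


context
  fixes V :: "'a set" and E
  assumes g: "fin_graph V E"
begin

lemma aut_lemmas:
  assumes phi: "mt_isom (modtree V E) (modtree V E) \<phi>"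
  shows aut_N: "\<And>x. x \<in> node_verts V E V \<Longrightarrow> \<phi> x \<in> node_verts V E V"
    and aut_Nr: "\<And>x. x \<in> mverts (modtree V E) \<Longrightarrow> \<phi> x \<in> node_verts V E V \<Longrightarrow> x \<in> node_verts V E V"
    and aut_bN: "bij_betw \<phi> (node_verts V E V) (node_verts V E V)"
    and aut_R: "\<And>u. u \<in> root_markers V E \<Longrightarrow> \<phi> u \<in> root_markers V E"
    and aut_H: "\<And>u. u \<in> root_markers V E \<Longrightarrow> \<phi> (hdv u) = hdv (\<phi> u)"
    and aut_I: "\<And>u. u \<in> root_markers V E \<Longrightarrow> mt_isom (subtree E u) (subtree E (\<phi> u)) \<phi>"
proof -
  have w: "wft (modtree V E)" using wft_T[OF g] .
  have bij: "bij_betw \<phi> (mverts (modtree V E)) (mverts (modtree V E))" using phi unfolding mt_isom_def by blast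
  have inT: "\<And>x. x \<in> mverts (modtree V E) \<Longrightarrow> \<phi> x \<in> mverts (modtree V E)" using bij bij_betwE by blast
  have rp: "\<And>x. x \<in> mverts (modtree V E) \<Longrightarrow> rootprop (modtree V E) (\<phi> x) \<longleftrightarrow> rootprop (modtree V E) x"
    using rootprop_iso[OF w w phi] by blast
  show aN: "\<And>x. x \<in> node_verts V E V \<Longrightarrow> \<phi> x \<in> node_verts V E V"
    using rp N_sub[OF g] root_T[OF g] by blast
  show aNr: "\<And>x. x \<in> mverts (modtree V E) \<Longrightarrow> \<phi> x \<in> node_verts V E V \<Longrightarrow> x \<in> node_verts V E V"
    using rp root_T[OF g] by blast
  show "bij_betw \<phi> (node_verts V E V) (node_verts V E V)"
  proof (rule bij_betw_subset[OF bij])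
    show "node_verts V E V \<subseteq> mverts (modtree V E)" using N_sub[OF g] by blast
    show "\<phi> ` node_verts V E V = node_verts V E V"
    proof
      show "\<phi> ` node_verts V E V \<subseteq> node_verts V E V" using aN by blast
      show "node_verts V E V \<subseteq> \<phi> ` node_verts V E V"
      proof
        fix y assume y: "y \<in> node_verts V E V"
        then obtain x where x: "x \<in> mverts (modtree V E)" "y = \<phi> x" using bij N_sub[OF g] unfolding bij_betw_def by blast
        then have "x \<in> node_verts V E V" using aNr y by blast
        then show "y \<in> \<phi> ` node_verts V E V" using x by blast
      qed
    qed
  qed
  have norm: "\<And>x. x \<in> mverts (modtree V E) \<Longrightarrow> x \<in> Inl ` V \<longleftrightarrow> \<phi> x \<in> Inl ` V"
    using phi unfolding mt_isom_def mnormal_mt by blast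
  show aR: "\<And>u. u \<in> root_markers V E \<Longrightarrow> \<phi> u \<in> root_markers V E"
  proof -
    fix u assume u: "u \<in> root_markers V E"
    have a: "u \<in> node_verts V E V" "u \<notin> Inl ` V" using R_iff_N[OF g, of u] u by auto
    then have "\<phi> u \<in> node_verts V E V" "\<phi> u \<notin> Inl ` V" using aN norm N_sub[OF g] by auto
    then show "\<phi> u \<in> root_markers V E" using R_iff_N[OF g, of "\<phi> u"] by simp
  qed
  show aH: "\<And>u. u \<in> root_markers V E \<Longrightarrow> \<phi> (hdv u) = hdv (\<phi> u)"
  proof -
    fix u assume u: "u \<in> root_markers V E"
    have e: "(u, hdv u) \<in> mtedges (modtree V E)" using G_TE[OF g, of u "hdv u"] u by blast
    have "u \<in> mverts (modtree V E)" "hdv u \<in> mverts (modtree V E)"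
      using N_sub[OF g] R_N[OF g] u PV_sub[OF g u hd_PV[OF g]] by auto
    then have "(\<phi> u, \<phi> (hdv u)) \<in> mtedges (modtree V E)" using phi e unfolding mt_isom_def by blast
    then consider "\<phi> u \<in> root_markers V E \<and> \<phi> (hdv u) = hdv (\<phi> u)"
      | u' where "u' \<in> root_markers V E" "\<phi> u \<in> BV E u'"
      using G_TE[OF g, of "\<phi> u" "\<phi> (hdv u)"] by blast
    then show "\<phi> (hdv u) = hdv (\<phi> u)"
    proof cases
      case 1 then show ?thesis by blast
    next
      case 2
      have "\<phi> u \<in> node_verts V E V" using aN R_N[OF g] u by blast
      then show ?thesis using BV_notN[OF g 2] by blast
    qed
  qed
  have aP: "\<And>u. u \<in> root_markers V E \<Longrightarrow> \<phi> ` PV E u = PV E (\<phi> u)"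
  proof -
    fix u assume u: "u \<in> root_markers V E"
    have hv: "hdv u \<in> mverts (modtree V E)" using PV_sub[OF g u hd_PV[OF g]] .
    have "\<phi> ` {y. (step (modtree V E))\<^sup>*\<^sup>* (hdv u) y} = {y. (step (modtree V E))\<^sup>*\<^sup>* (\<phi> (hdv u)) y}"
      using reach_iso[OF w w phi hv] .
    then show "\<phi> ` PV E u = PV E (\<phi> u)" using G_reach[OF g u] G_reach[OF g aR[OF u]] aH[OF u] by simp
  qed
  show "\<And>u. u \<in> root_markers V E \<Longrightarrow> mt_isom (subtree E u) (subtree E (\<phi> u)) \<phi>"
  proof -
    fix u assume u: "u \<in> root_markers V E"
    have pu: "\<phi> u \<in> root_markers V E" using aR u by blast
    have inj: "inj_on \<phi> (mverts (modtree V E))" using bij unfolding bij_betw_def by blast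
    have PVs: "\<And>x. x \<in> PV E u \<Longrightarrow> x \<in> mverts (modtree V E)" using PV_sub[OF g u] by blast
    have fwd: "\<And>x. x \<in> BV E u \<Longrightarrow> \<phi> x \<in> BV E (\<phi> u)"
    proof -
      fix x assume x: "x \<in> BV E u"
      have "\<phi> x \<in> PV E (\<phi> u)" using aP[OF u] BV_PV[OF g x] by blast
      moreover have "\<phi> x \<noteq> hdv (\<phi> u)"
      proof
        assume "\<phi> x = hdv (\<phi> u)"
        then have "\<phi> x = \<phi> (hdv u)" using aH u by simp
        then have "x = hdv u" using inj PVs BV_PV[OF g x] hd_PV[OF g] unfolding inj_on_def by blast
        then show False using x G_hdB[OF g u] by simp
      qed
      ultimately show "\<phi> x \<in> BV E (\<phi> u)" using PV_cases[OF g] by blast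
    qed
    have bw: "\<phi> ` BV E u = BV E (\<phi> u)"
    proof
      show "\<phi> ` BV E u \<subseteq> BV E (\<phi> u)" using fwd by blast
      show "BV E (\<phi> u) \<subseteq> \<phi> ` BV E u"
      proof
        fix z assume z: "z \<in> BV E (\<phi> u)"
        then have "z \<in> \<phi> ` PV E u" using aP[OF u] BV_PV[OF g] by blast
        then obtain y where y: "y \<in> PV E u" "z = \<phi> y" by blast
        have "y \<noteq> hdv u" using y z aH[OF u] G_hdB[OF g pu] by auto
        then show "z \<in> \<phi> ` BV E u" using y PV_cases[OF g] by blast
      qed
    qed
    have bb: "bij_betw \<phi> (BV E u) (BV E (\<phi> u))"
      using bij_betw_subset[OF bij _ bw] BV_sub[OF g u] by blast
    show "mt_isom (subtree E u) (subtree E (\<phi> u)) \<phi>"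
      unfolding mt_isom_def
    proof (intro conjI ballI)
      show "bij_betw \<phi> (mverts (subtree E u)) (mverts (subtree E (\<phi> u)))" using bb unfolding BV_def .
      fix x assume x: "x \<in> mverts (subtree E u)"
      then have xB: "x \<in> BV E u" unfolding BV_def .
      have fxB: "\<phi> x \<in> BV E (\<phi> u)" using fwd xB by blast
      have xT: "x \<in> mverts (modtree V E)" using BV_sub[OF g u xB] .
      show "x \<in> mnormal (subtree E u) \<longleftrightarrow> \<phi> x \<in> mnormal (subtree E (\<phi> u))"
        using G_D5[OF g u xB] G_D5[OF g pu fxB] phi xT unfolding mt_isom_def by blast
      fix y assume y: "y \<in> mverts (subtree E u)"
      then have yB: "y \<in> BV E u" unfolding BV_def .
      have fyB: "\<phi> y \<in> BV E (\<phi> u)" using fwd yB by blast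
      have yT: "y \<in> mverts (modtree V E)" using BV_sub[OF g u yB] .
      have e1: "(x, y) \<in> mnedges (modtree V E) \<longleftrightarrow> (\<phi> x, \<phi> y) \<in> mnedges (modtree V E)"
        and e2: "(x, y) \<in> mtedges (modtree V E) \<longleftrightarrow> (\<phi> x, \<phi> y) \<in> mtedges (modtree V E)"
        using phi xT yT unfolding mt_isom_def by blast+
      show "((x, y) \<in> mnedges (subtree E u)) = ((\<phi> x, \<phi> y) \<in> mnedges (subtree E (\<phi> u)))"
        using e1 G_D3a[OF g u xB yB] G_D3a[OF g pu fxB fyB] by blast
      show "((x, y) \<in> mtedges (subtree E u)) = ((\<phi> x, \<phi> y) \<in> mtedges (subtree E (\<phi> u)))"
        using e2 G_D4a[OF g u xB yB] G_D4a[OF g pu fxB fyB] by blast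
    qed
  qed
qed

end


definition sig :: "'a set \<Rightarrow> ('a \<Rightarrow> 'a \<Rightarrow> bool) \<Rightarrow> 'a mvert \<Rightarrow> 'a mvert \<Rightarrow> 'a mvert \<Rightarrow> 'a mvert" where
  "sig V E u w = rep_iso_inv V E w \<circ> rep_iso V E u"

context
  fixes V :: "'a set" and E
  assumes g: "fin_graph V E"
begin

lemma rho1: "u \<in> root_markers V E \<Longrightarrow> rep_marker V E u \<in> root_markers V E \<and> mt_isomorphic (subtree E u) (subtree E (rep_marker V E u))"
  unfolding rep_marker_def by (rule someI[of _ u]) (simp add: mt_isomorphic_refl)

lemma rho_eq:
  assumes u: "u \<in> root_markers V E" and w: "w \<in> root_markers V E"
    and iso: "mt_isomorphic (subtree E u) (subtree E w)"
  shows "rep_marker V E u = rep_marker V E w"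
proof -
  have "(\<lambda>x. x \<in> root_markers V E \<and> mt_isomorphic (subtree E u) (subtree E x)) =
        (\<lambda>x. x \<in> root_markers V E \<and> mt_isomorphic (subtree E w) (subtree E x))"
    using iso mt_isomorphic_sym mt_isomorphic_trans by blast
  then show ?thesis unfolding rep_marker_def by simp
qed

lemma iota: "u \<in> root_markers V E \<Longrightarrow> rep_iso V E u \<in> extensional (BV E u) \<and>
    mt_isom (subtree E u) (subtree E (rep_marker V E u)) (rep_iso V E u)"
proof -
  assume u: "u \<in> root_markers V E"
  have "mt_isomorphic (subtree E u) (subtree E (rep_marker V E u))" using rho1 u by blast
  then obtain f where "mt_isom (subtree E u) (subtree E (rep_marker V E u)) f" unfolding mt_isomorphic_def by blast
  then have ex: "\<exists>f. f \<in> extensional (mverts (subtree E u)) \<and> mt_isom (subtree E u) (subtree E (rep_marker V E u)) f"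
    using mt_isom_ex_ext by blast
  show ?thesis unfolding rep_iso_def BV_def by (rule someI_ex[OF ex])
qed

lemma iota_inv: "u \<in> root_markers V E \<Longrightarrow>
    mt_isom (subtree E (rep_marker V E u)) (subtree E u) (rep_iso_inv V E u) \<and>
    (\<forall>x\<in>BV E u. rep_iso_inv V E u (rep_iso V E u x) = x) \<and>
    (\<forall>y\<in>BV E (rep_marker V E u). rep_iso V E u (rep_iso_inv V E u y) = y)"
proof -
  assume u: "u \<in> root_markers V E"
  let ?f = "rep_iso V E u"
  have f: "mt_isom (subtree E u) (subtree E (rep_marker V E u)) ?f" using iota u by blast
  have bf: "bij_betw ?f (BV E u) (BV E (rep_marker V E u))" using f unfolding mt_isom_def BV_def by blast
  have eq: "rep_iso_inv V E u = restrict (inv_into (BV E u) ?f) (BV E (rep_marker V E u))"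
    unfolding rep_iso_inv_def BV_def by simp
  have i1: "mt_isom (subtree E (rep_marker V E u)) (subtree E u) (inv_into (BV E u) ?f)"
    using mt_isom_inv[OF f] unfolding BV_def .
  have "mt_isom (subtree E (rep_marker V E u)) (subtree E u) (rep_iso_inv V E u)"
    by (rule mt_isom_cong[OF i1]) (simp add: eq BV_def)
  moreover have "\<forall>x\<in>BV E u. rep_iso_inv V E u (?f x) = x"
  proof
    fix x assume x: "x \<in> BV E u"
    have "?f x \<in> BV E (rep_marker V E u)" using bf x bij_betwE by blast
    then show "rep_iso_inv V E u (?f x) = x" unfolding eq using bf x
      by (simp add: bij_betw_def inv_into_f_f)
  qed
  moreover have "\<forall>y\<in>BV E (rep_marker V E u). ?f (rep_iso_inv V E u y) = y"
  proof
    fix y assume y: "y \<in> BV E (rep_marker V E u)"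
    then show "?f (rep_iso_inv V E u y) = y" unfolding eq using bf
      by (simp add: bij_betw_inv_into_right)
  qed
  ultimately show ?thesis by blast
qed

lemma sig_iso:
  assumes u: "u \<in> root_markers V E" and w: "w \<in> root_markers V E"
    and r: "rep_marker V E u = rep_marker V E w"
  shows "mt_isom (subtree E u) (subtree E w) (sig V E u w)"
proof -
  have "mt_isom (subtree E u) (subtree E (rep_marker V E w)) (rep_iso V E u)" using iota u r by metis
  moreover have "mt_isom (subtree E (rep_marker V E w)) (subtree E w) (rep_iso_inv V E w)" using iota_inv w by blast
  ultimately show ?thesis unfolding sig_def using mt_isom_comp by blast
qed

lemma sig_in:
  assumes u: "u \<in> root_markers V E" and w: "w \<in> root_markers V E"
    and r: "rep_marker V E u = rep_marker V E w" and x: "x \<in> BV E u"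
  shows "sig V E u w x \<in> BV E w"
  using mt_isom_in[OF sig_iso[OF u w r]] x unfolding BV_def by blast

lemma sig_comp:
  assumes u: "u \<in> root_markers V E" and w: "w \<in> root_markers V E" and v: "v \<in> root_markers V E"
    and r1: "rep_marker V E u = rep_marker V E w" and r2: "rep_marker V E w = rep_marker V E v"
    and x: "x \<in> BV E u"
  shows "sig V E w v (sig V E u w x) = sig V E u v x"
proof -
  have "rep_iso V E u x \<in> BV E (rep_marker V E u)"
    using mt_isom_in[OF conjunct2[OF iota[OF u]]] x unfolding BV_def by blast
  then have "rep_iso V E w (rep_iso_inv V E w (rep_iso V E u x)) = rep_iso V E u x"
    using iota_inv[OF w] r1 by auto
  then show ?thesis unfolding sig_def by simp
qed

lemma sig_id:
  assumes u: "u \<in> root_markers V E" and x: "x \<in> BV E u"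
  shows "sig V E u u x = x"
  using iota_inv[OF u] x unfolding sig_def by simp

lemma transport_eq: "transport V E u w f = restrict (sig V E u w \<circ> f \<circ> sig V E w u) (BV E w)"
  unfolding transport_def sig_def BV_def by (simp add: comp_assoc)

end


definition owner :: "'a set \<Rightarrow> ('a \<Rightarrow> 'a \<Rightarrow> bool) \<Rightarrow> 'a mvert \<Rightarrow> 'a mvert" where
  "owner V E x = (SOME u. u \<in> root_markers V E \<and> x \<in> PV E u)"

definition PhiM :: "'a set \<Rightarrow> ('a \<Rightarrow> 'a \<Rightarrow> bool) \<Rightarrow> ('a mvert \<Rightarrow> 'a mvert \<Rightarrow> 'a mvert) \<Rightarrow> ('a mvert \<Rightarrow> 'a mvert) \<Rightarrow> 'a mvert \<Rightarrow> 'a mvert" where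
  "PhiM V E a p = (\<lambda>x. if x \<in> node_verts V E V then p x
      else if x \<in> mverts (modtree V E) then
        (if x = hdv (owner V E x) then hdv (p (owner V E x))
         else a (p (owner V E x)) (sig V E (owner V E x) (p (owner V E x)) x))
      else undefined)"

definition PsiM :: "'a set \<Rightarrow> ('a \<Rightarrow> 'a \<Rightarrow> bool) \<Rightarrow> ('a mvert \<Rightarrow> 'a mvert) \<Rightarrow>
     ('a mvert \<Rightarrow> 'a mvert \<Rightarrow> 'a mvert) \<times> ('a mvert \<Rightarrow> 'a mvert)" where
  "PsiM V E \<phi> = ((\<lambda>w\<in>root_markers V E.
        restrict (\<phi> \<circ> sig V E w (inv_into (node_verts V E V) (restrict \<phi> (node_verts V E V)) w)) (BV E w)),
      restrict \<phi> (node_verts V E V))"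

lemma inv_into_eqI: "bij_betw p A A \<Longrightarrow> u \<in> A \<Longrightarrow> p u = w \<Longrightarrow> inv_into A p w = u"
  unfolding bij_betw_def using inv_into_f_f by fastforce

context
  fixes V :: "'a set" and E
  assumes g: "fin_graph V E"
begin

lemma owner_eq: "u \<in> root_markers V E \<Longrightarrow> x \<in> PV E u \<Longrightarrow> owner V E x = u"
  unfolding owner_def
proof (rule some_equality)
  assume "u \<in> root_markers V E" "x \<in> PV E u"
  then show "u \<in> root_markers V E \<and> x \<in> PV E u" by blast
next
  fix u' assume "u \<in> root_markers V E" "x \<in> PV E u" "u' \<in> root_markers V E \<and> x \<in> PV E u'"
  then show "u' = u" using G_disjP[OF g] by blast
qed

lemma Phi_N: "x \<in> node_verts V E V \<Longrightarrow> PhiM V E a p x = p x"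
  unfolding PhiM_def by simp

lemma Phi_H: "u \<in> root_markers V E \<Longrightarrow> PhiM V E a p (hdv u) = hdv (p u)"
proof -
  assume u: "u \<in> root_markers V E"
  have "hdv u \<notin> node_verts V E V" using hd_notN[OF g u] .
  moreover have "hdv u \<in> mverts (modtree V E)" using PV_sub[OF g u hd_PV[OF g]] .
  moreover have "owner V E (hdv u) = u" using owner_eq u hd_PV[OF g] by blast
  ultimately show ?thesis unfolding PhiM_def by simp
qed

lemma Phi_B: "u \<in> root_markers V E \<Longrightarrow> x \<in> BV E u \<Longrightarrow> PhiM V E a p x = a (p u) (sig V E u (p u) x)"
proof -
  assume u: "u \<in> root_markers V E" and x: "x \<in> BV E u"
  have "x \<notin> node_verts V E V" using BV_notN[OF g u x] .
  moreover have "x \<in> mverts (modtree V E)" using BV_sub[OF g u x] .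
  moreover have "owner V E x = u" using owner_eq u BV_PV[OF g x] by blast
  moreover have "x \<noteq> hdv u" using x G_hdB[OF g u] by blast
  ultimately show ?thesis unfolding PhiM_def by simp
qed

lemma Phi_out: "x \<notin> mverts (modtree V E) \<Longrightarrow> PhiM V E a p x = undefined"
proof -
  assume x: "x \<notin> mverts (modtree V E)"
  then have "x \<notin> node_verts V E V" using N_sub[OF g] by blast
  then show ?thesis unfolding PhiM_def using x by simp
qed

lemma arn_unfold:
  assumes "p \<in> aut_root_node V E"
  shows "p \<in> extensional (node_verts V E V)" and "bij_betw p (node_verts V E V) (node_verts V E V)"
    and "\<forall>x\<in>node_verts V E V. x \<in> Inl ` V \<longleftrightarrow> p x \<in> Inl ` V"
    and "\<forall>x\<in>node_verts V E V. \<forall>y\<in>node_verts V E V. (x, y) \<in> mnedges (modtree V E) \<longleftrightarrow> (p x, p y) \<in> mnedges (modtree V E)"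
    and "\<forall>v\<in>root_markers V E. mt_isomorphic (subtree E v) (subtree E (p v))"
  using assms unfolding aut_root_node_def root_node_def mnormal_mt mem_Collect_eq by blast+

lemma arn_R: "p \<in> aut_root_node V E \<Longrightarrow> u \<in> root_markers V E \<Longrightarrow> p u \<in> root_markers V E"
proof -
  assume p: "p \<in> aut_root_node V E" and u: "u \<in> root_markers V E"
  have a: "u \<in> node_verts V E V" "u \<notin> Inl ` V" using R_iff_N[OF g, of u] u by auto
  then have "p u \<in> node_verts V E V" using arn_unfold(2)[OF p] bij_betwE by blast
  moreover have "p u \<notin> Inl ` V" using bspec[OF arn_unfold(3)[OF p] a(1)] a(2) by simp
  ultimately show ?thesis using R_iff_N[OF g, of "p u"] by simp
qed

lemma arn_rho: "p \<in> aut_root_node V E \<Longrightarrow> u \<in> root_markers V E \<Longrightarrow> rep_marker V E u = rep_marker V E (p u)"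
proof -
  assume p: "p \<in> aut_root_node V E" and u: "u \<in> root_markers V E"
  have "mt_isomorphic (subtree E u) (subtree E (p u))" using arn_unfold(5)[OF p] u by blast
  then show ?thesis using rho_eq[OF g u arn_R[OF p u]] by blast
qed

lemma arn_inv: "p \<in> aut_root_node V E \<Longrightarrow> w \<in> root_markers V E \<Longrightarrow>
   inv_into (node_verts V E V) p w \<in> root_markers V E \<and> p (inv_into (node_verts V E V) p w) = w"
proof -
  assume p: "p \<in> aut_root_node V E" and w: "w \<in> root_markers V E"
  have b: "bij_betw p (node_verts V E V) (node_verts V E V)" using arn_unfold(2)[OF p] .
  have wN: "w \<in> node_verts V E V" "w \<notin> Inl ` V" using R_iff_N[OF g, of w] w by auto
  let ?u = "inv_into (node_verts V E V) p w"
  have wim: "w \<in> p ` node_verts V E V" using b wN unfolding bij_betw_def by blast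
  have uN: "?u \<in> node_verts V E V" using inv_into_into[OF wim] .
  have pu: "p ?u = w" using f_inv_into_f[OF wim] .
  have "?u \<notin> Inl ` V" using bspec[OF arn_unfold(3)[OF p] uN] pu wN(2) by simp
  then show ?thesis using uN pu R_iff_N[OF g, of ?u] by simp
qed

lemma carrier_SD: "(a, p) \<in> carrier (semidirect_aut V E) \<longleftrightarrow>
   a \<in> (\<Pi>\<^sub>E v\<in>root_markers V E. carrier (aut_group (subtree E v))) \<and> p \<in> aut_root_node V E"
  unfolding semidirect_aut_def by simp

lemma carrier_aut: "f \<in> carrier (aut_group T) \<longleftrightarrow> f \<in> extensional (mverts T) \<and> mt_isom T T f"
  unfolding aut_group_def by simp

lemma Phi_in:
  assumes ap: "(a, p) \<in> carrier (semidirect_aut V E)"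
  shows "PhiM V E a p \<in> carrier (aut_group (modtree V E))"
proof -
  have a: "a \<in> (\<Pi>\<^sub>E v\<in>root_markers V E. carrier (aut_group (subtree E v)))" and p: "p \<in> aut_root_node V E"
    using ap carrier_SD by auto
  let ?f = "PhiM V E a p"
  have ext: "?f \<in> extensional (mverts (modtree V E))" using Phi_out unfolding extensional_def by blast
  have iso: "mt_isom (modtree V E) (modtree V E) ?f"
  proof (rule glue_isom[OF g])
    show "bij_betw ?f (node_verts V E V) (node_verts V E V)"
    proof -
      have "bij_betw ?f (node_verts V E V) (node_verts V E V) \<longleftrightarrow> bij_betw p (node_verts V E V) (node_verts V E V)"
        by (rule bij_betw_cong) (simp add: Phi_N)
      then show ?thesis using arn_unfold(2)[OF p] by blast
    qed
    show "\<forall>x\<in>node_verts V E V. x \<in> Inl ` V \<longleftrightarrow> ?f x \<in> Inl ` V" using arn_unfold(3)[OF p] Phi_N by simp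
    show "\<forall>x\<in>node_verts V E V. \<forall>y\<in>node_verts V E V. (x, y) \<in> mnedges (modtree V E) \<longleftrightarrow> (?f x, ?f y) \<in> mnedges (modtree V E)"
      using arn_unfold(4)[OF p] Phi_N by simp
    show "\<forall>u\<in>root_markers V E. ?f (hdv u) = hdv (?f u)" using Phi_H Phi_N R_N[OF g] by simp
    show "\<forall>u\<in>root_markers V E. mt_isom (subtree E u) (subtree E (?f u)) ?f"
    proof
      fix u assume u: "u \<in> root_markers V E"
      have fu: "?f u = p u" using Phi_N R_N[OF g] u by simp
      have pu: "p u \<in> root_markers V E" using arn_R[OF p u] .
      have r: "rep_marker V E u = rep_marker V E (p u)" using arn_rho[OF p u] .
      have s: "mt_isom (subtree E u) (subtree E (p u)) (sig V E u (p u))" using sig_iso[OF g u pu r] .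
      have ai: "mt_isom (subtree E (p u)) (subtree E (p u)) (a (p u))"
        using a pu carrier_aut by blast
      have c: "mt_isom (subtree E u) (subtree E (p u)) (a (p u) \<circ> sig V E u (p u))"
        using mt_isom_comp[OF s ai] .
      have "mt_isom (subtree E u) (subtree E (p u)) ?f"
        by (rule mt_isom_cong[OF c]) (simp add: Phi_B[OF u] BV_def)
      then show "mt_isom (subtree E u) (subtree E (?f u)) ?f" using fu by simp
    qed
  qed
  show ?thesis using ext iso carrier_aut by blast
qed

lemma Psi_in:
  assumes phi: "\<phi> \<in> carrier (aut_group (modtree V E))"
  shows "PsiM V E \<phi> \<in> carrier (semidirect_aut V E)"
proof -
  have pe: "\<phi> \<in> extensional (mverts (modtree V E))" and pi: "mt_isom (modtree V E) (modtree V E) \<phi>"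
    using phi carrier_aut by auto
  let ?p = "restrict \<phi> (node_verts V E V)"
  have bN: "bij_betw \<phi> (node_verts V E V) (node_verts V E V)" using aut_bN[OF g pi] .
  have bp: "bij_betw ?p (node_verts V E V) (node_verts V E V)"
    using bij_betw_cong[of "node_verts V E V" ?p \<phi>] bN by simp
  have NT: "\<And>x. x \<in> node_verts V E V \<Longrightarrow> x \<in> mverts (modtree V E)" using N_sub[OF g] .
  have p: "?p \<in> aut_root_node V E"
    unfolding aut_root_node_def root_node_def mem_Collect_eq
  proof (intro conjI ballI)
    show "?p \<in> extensional (node_verts V E V)" by simp
    show "bij_betw ?p (node_verts V E V) (node_verts V E V)" by (rule bp)
    fix x assume x: "x \<in> node_verts V E V"
    show "x \<in> mnormal (modtree V E) \<longleftrightarrow> ?p x \<in> mnormal (modtree V E)"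
      using pi NT[OF x] x unfolding mt_isom_def by simp
    fix y assume y: "y \<in> node_verts V E V"
    show "(x, y) \<in> mnedges (modtree V E) \<longleftrightarrow> (?p x, ?p y) \<in> mnedges (modtree V E)"
      using pi NT[OF x] NT[OF y] x y unfolding mt_isom_def by simp
  next
    fix v assume v: "v \<in> root_markers V E"
    have "mt_isom (subtree E v) (subtree E (\<phi> v)) \<phi>" using aut_I[OF g pi v] .
    then show "mt_isomorphic (subtree E v) (subtree E (?p v))"
      using v R_N[OF g] unfolding mt_isomorphic_def by auto
  qed
  have a: "(\<lambda>w\<in>root_markers V E. restrict (\<phi> \<circ> sig V E w (inv_into (node_verts V E V) ?p w)) (BV E w))
      \<in> (\<Pi>\<^sub>E v\<in>root_markers V E. carrier (aut_group (subtree E v)))"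
  proof (rule PiE_I)
    fix w assume w: "w \<in> root_markers V E"
    let ?u = "inv_into (node_verts V E V) ?p w"
    have u: "?u \<in> root_markers V E" "?p ?u = w" using arn_inv[OF p w] by auto
    have phu: "\<phi> ?u = w" using u R_N[OF g] by auto
    have iu: "mt_isom (subtree E ?u) (subtree E w) \<phi>" using aut_I[OF g pi u(1)] phu by simp
    have r: "rep_marker V E w = rep_marker V E ?u"
      using rho_eq[OF g u(1) w] iu unfolding mt_isomorphic_def by metis
    have s: "mt_isom (subtree E w) (subtree E ?u) (sig V E w ?u)" using sig_iso[OF g w u(1) r] .
    have c: "mt_isom (subtree E w) (subtree E w) (\<phi> \<circ> sig V E w ?u)" using mt_isom_comp[OF s iu] .
    have "mt_isom (subtree E w) (subtree E w) (restrict (\<phi> \<circ> sig V E w ?u) (BV E w))"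
      by (rule mt_isom_cong[OF c]) (simp add: BV_def)
    then show "(\<lambda>w\<in>root_markers V E. restrict (\<phi> \<circ> sig V E w (inv_into (node_verts V E V) ?p w)) (BV E w)) w
        \<in> carrier (aut_group (subtree E w))"
      using w unfolding carrier_aut BV_def by simp
  qed simp
  show ?thesis unfolding PsiM_def carrier_SD using a p by blast
qed

end


context
  fixes V :: "'a set" and E
  assumes g: "fin_graph V E"
begin

lemma Psi_Phi:
  assumes ap: "(a, p) \<in> carrier (semidirect_aut V E)"
  shows "PsiM V E (PhiM V E a p) = (a, p)"
proof -
  have a: "a \<in> (\<Pi>\<^sub>E v\<in>root_markers V E. carrier (aut_group (subtree E v)))" and p: "p \<in> aut_root_node V E"
    using ap carrier_SD[OF g] by auto
  have pe: "p \<in> extensional (node_verts V E V)" using arn_unfold(1)[OF g p] .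
  have pr: "restrict (PhiM V E a p) (node_verts V E V) = p"
  proof
    fix x show "restrict (PhiM V E a p) (node_verts V E V) x = p x"
      using pe Phi_N[OF g] unfolding extensional_def by auto
  qed
  have first: "(\<lambda>w\<in>root_markers V E. restrict (PhiM V E a p \<circ> sig V E w (inv_into (node_verts V E V) p w)) (BV E w)) = a"
  proof
    fix w
    show "(\<lambda>w\<in>root_markers V E. restrict (PhiM V E a p \<circ> sig V E w (inv_into (node_verts V E V) p w)) (BV E w)) w = a w"
    proof (cases "w \<in> root_markers V E")
      case False then show ?thesis using a unfolding PiE_def extensional_def by auto
    next
      case w: True
      let ?u = "inv_into (node_verts V E V) p w"
      have u: "?u \<in> root_markers V E" "p ?u = w" using arn_inv[OF g p w] by auto
      have r: "rep_marker V E ?u = rep_marker V E w" using arn_rho[OF g p u(1)] u(2) by simp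
      have aw: "a w \<in> extensional (BV E w)" using a w carrier_aut[OF g] unfolding BV_def by blast
      have "restrict (PhiM V E a p \<circ> sig V E w ?u) (BV E w) = a w"
      proof
        fix y show "restrict (PhiM V E a p \<circ> sig V E w ?u) (BV E w) y = a w y"
        proof (cases "y \<in> BV E w")
          case False then show ?thesis using aw unfolding extensional_def by simp
        next
          case y: True
          have s1: "sig V E w ?u y \<in> BV E ?u" using sig_in[OF g w u(1) r[symmetric] y] .
          have "PhiM V E a p (sig V E w ?u y) = a w (sig V E ?u w (sig V E w ?u y))"
            using Phi_B[OF g u(1) s1] u(2) by simp
          also have "sig V E ?u w (sig V E w ?u y) = sig V E w w y"
            using sig_comp[OF g w u(1) w r[symmetric] r y] .
          also have "\<dots> = y" using sig_id[OF g w y] .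
          finally show ?thesis using y by simp
        qed
      qed
      then show ?thesis using w by simp
    qed
  qed
  show ?thesis unfolding PsiM_def pr using first by simp
qed

lemma Phi_Psi:
  assumes phi: "\<phi> \<in> carrier (aut_group (modtree V E))"
  shows "PhiM V E (fst (PsiM V E \<phi>)) (snd (PsiM V E \<phi>)) = \<phi>"
proof
  have pe: "\<phi> \<in> extensional (mverts (modtree V E))" and pi: "mt_isom (modtree V E) (modtree V E) \<phi>"
    using phi carrier_aut[OF g] by auto
  let ?p = "restrict \<phi> (node_verts V E V)"
  let ?a = "fst (PsiM V E \<phi>)"
  have sp: "snd (PsiM V E \<phi>) = ?p" unfolding PsiM_def by simp
  have bp: "bij_betw ?p (node_verts V E V) (node_verts V E V)"
    using bij_betw_cong[of "node_verts V E V" ?p \<phi>] aut_bN[OF g pi] by simp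
  fix x
  show "PhiM V E ?a (snd (PsiM V E \<phi>)) x = \<phi> x"
    unfolding sp
  proof (cases "x \<in> mverts (modtree V E)")
    case False
    then show "PhiM V E ?a ?p x = \<phi> x" using Phi_out[OF g False] pe unfolding extensional_def by simp
  next
    case True
    consider "x \<in> node_verts V E V" | u where "u \<in> root_markers V E" "x = hdv u"
      | u where "u \<in> root_markers V E" "x \<in> BV E u" using G_cover[OF g True] by blast
    then show "PhiM V E ?a ?p x = \<phi> x"
    proof cases
      case 1 then show ?thesis using Phi_N[OF g] by simp
    next
      case 2
      then show ?thesis using Phi_H[OF g 2(1)] aut_H[OF g pi 2(1)] R_N[OF g 2(1)] by simp
    next
      case 3
      note u = 3(1) and xB = 3(2)
      let ?w = "\<phi> u"
      have uN: "u \<in> node_verts V E V" using R_N[OF g u] .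
      have pu: "?p u = ?w" using uN by simp
      have w: "?w \<in> root_markers V E" using aut_R[OF g pi u] .
      have inv: "inv_into (node_verts V E V) ?p ?w = u" using inv_into_eqI[OF bp uN pu] .
      have iu: "mt_isom (subtree E u) (subtree E ?w) \<phi>" using aut_I[OF g pi u] .
      have r: "rep_marker V E u = rep_marker V E ?w"
        using rho_eq[OF g u w] iu unfolding mt_isomorphic_def by blast
      have aw: "?a ?w = restrict (\<phi> \<circ> sig V E ?w u) (BV E ?w)"
        unfolding PsiM_def using w inv by simp
      have s1: "sig V E u ?w x \<in> BV E ?w" using sig_in[OF g u w r xB] .
      have "PhiM V E ?a ?p x = ?a ?w (sig V E u ?w x)" using Phi_B[OF g u xB] pu by simp
      also have "\<dots> = \<phi> (sig V E ?w u (sig V E u ?w x))" using aw s1 by simp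
      also have "sig V E ?w u (sig V E u ?w x) = sig V E u u x" using sig_comp[OF g u w u r r[symmetric] xB] .
      also have "\<dots> = x" using sig_id[OF g u xB] .
      finally show ?thesis .
    qed
  qed
qed

lemma aut_mult: "x \<otimes>\<^bsub>aut_group T\<^esub> y = compose (mverts T) x y"
  unfolding aut_group_def by simp

lemma aut_closed:
  assumes "\<phi> \<in> carrier (aut_group T)" "\<psi> \<in> carrier (aut_group T)"
  shows "compose (mverts T) \<phi> \<psi> \<in> carrier (aut_group T)"
proof -
  have i: "mt_isom T T \<phi>" "mt_isom T T \<psi>" using assms unfolding aut_group_def by auto
  have "mt_isom T T (\<phi> \<circ> \<psi>)" using mt_isom_comp[OF i(2) i(1)] .
  then have "mt_isom T T (compose (mverts T) \<phi> \<psi>)" by (rule mt_isom_cong) (simp add: compose_def)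
  then show ?thesis unfolding aut_group_def by (simp add: compose_def)
qed

lemma Psi_hom:
  assumes phi: "\<phi> \<in> carrier (aut_group (modtree V E))" and psi: "\<psi> \<in> carrier (aut_group (modtree V E))"
  shows "PsiM V E (\<phi> \<otimes>\<^bsub>aut_group (modtree V E)\<^esub> \<psi>) = PsiM V E \<phi> \<otimes>\<^bsub>semidirect_aut V E\<^esub> PsiM V E \<psi>"
proof -
  let ?N = "node_verts V E V" and ?R = "root_markers V E" and ?T = "modtree V E"
  let ?chi = "compose (mverts ?T) \<phi> \<psi>"
  have chi: "?chi \<in> carrier (aut_group ?T)" using aut_closed[OF phi psi] .
  have pi: "mt_isom ?T ?T \<phi>" and si: "mt_isom ?T ?T \<psi>" and ci: "mt_isom ?T ?T ?chi"
    using phi psi chi carrier_aut[OF g] by auto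
  have chiv: "\<And>x. x \<in> mverts ?T \<Longrightarrow> ?chi x = \<phi> (\<psi> x)" by (simp add: compose_def)
  let ?pp = "restrict \<phi> ?N" and ?qq = "restrict \<psi> ?N" and ?cc = "restrict ?chi ?N"
  have bpp: "bij_betw ?pp ?N ?N" using bij_betw_cong[of ?N ?pp \<phi>] aut_bN[OF g pi] by simp
  have bqq: "bij_betw ?qq ?N ?N" using bij_betw_cong[of ?N ?qq \<psi>] aut_bN[OF g si] by simp
  have bcc: "bij_betw ?cc ?N ?N" using bij_betw_cong[of ?N ?cc ?chi] aut_bN[OF g ci] by simp
  define a where "a = fst (PsiM V E \<phi>)"
  define b where "b = fst (PsiM V E \<psi>)"
  have Pphi: "PsiM V E \<phi> = (a, ?pp)" and Ppsi: "PsiM V E \<psi> = (b, ?qq)" unfolding a_def b_def PsiM_def by simp_all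
  have aw_eq: "\<And>w. w \<in> ?R \<Longrightarrow> a w = restrict (\<phi> \<circ> sig V E w (inv_into ?N ?pp w)) (BV E w)"
    unfolding a_def PsiM_def by simp
  have bw_eq: "\<And>w. w \<in> ?R \<Longrightarrow> b w = restrict (\<psi> \<circ> sig V E w (inv_into ?N ?qq w)) (BV E w)"
    unfolding b_def PsiM_def by simp
  have rhs: "PsiM V E \<phi> \<otimes>\<^bsub>semidirect_aut V E\<^esub> PsiM V E \<psi> =
      ((\<lambda>v\<in>?R. compose (BV E v) (a v) (root_action V E ?pp b v)), compose ?N ?pp ?qq)"
    unfolding Pphi Ppsi semidirect_aut_def root_node_def by (simp add: aut_mult BV_def)
  have second: "restrict ?chi ?N = compose ?N ?pp ?qq"
  proof
    fix x show "restrict ?chi ?N x = compose ?N ?pp ?qq x"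
    proof (cases "x \<in> ?N")
      case True
      have "\<psi> x \<in> ?N" using aut_N[OF g si True] .
      then show ?thesis using True N_sub[OF g True] chiv by (simp add: compose_def)
    next
      case False then show ?thesis by (simp add: compose_def)
    qed
  qed
  have first: "(\<lambda>w\<in>?R. restrict (?chi \<circ> sig V E w (inv_into ?N ?cc w)) (BV E w)) =
      (\<lambda>v\<in>?R. compose (BV E v) (a v) (root_action V E ?pp b v))"
  proof
    fix v
    show "(\<lambda>w\<in>?R. restrict (?chi \<circ> sig V E w (inv_into ?N ?cc w)) (BV E w)) v =
      (\<lambda>v\<in>?R. compose (BV E v) (a v) (root_action V E ?pp b v)) v"
    proof (cases "v \<in> ?R")
      case False then show ?thesis by simp
    next
      case v: True
      let ?u = "inv_into ?N ?pp v"
      have pR: "?pp \<in> aut_root_node V E" and qR: "?qq \<in> aut_root_node V E"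
        using Psi_in[OF g phi] Psi_in[OF g psi] Pphi Ppsi carrier_SD[OF g] by metis+
      have u: "?u \<in> ?R" "?pp ?u = v" using arn_inv[OF g pR v] by auto
      have phu: "\<phi> ?u = v" using u R_N[OF g] by auto
      let ?u3 = "inv_into ?N ?qq ?u"
      have u3: "?u3 \<in> ?R" "?qq ?u3 = ?u" using arn_inv[OF g qR u(1)] by auto
      have psu: "\<psi> ?u3 = ?u" using u3 R_N[OF g] by auto
      have chu: "?cc ?u3 = v" using u3 R_N[OF g] N_sub[OF g] chiv psu phu by auto
      have inv3: "inv_into ?N ?cc v = ?u3" using inv_into_eqI[OF bcc R_N[OF g u3(1)] chu] .
      have iu: "mt_isom (subtree E ?u) (subtree E v) \<phi>" using aut_I[OF g pi u(1)] phu by simp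
      have iu3: "mt_isom (subtree E ?u3) (subtree E ?u) \<psi>" using aut_I[OF g si u3(1)] psu by simp
      have r1: "rep_marker V E ?u = rep_marker V E v"
        using rho_eq[OF g u(1) v] iu unfolding mt_isomorphic_def by blast
      have r2: "rep_marker V E ?u3 = rep_marker V E ?u"
        using rho_eq[OF g u3(1) u(1)] iu3 unfolding mt_isomorphic_def by blast
      have ra: "root_action V E ?pp b v = transport V E ?u v (b ?u)"
        unfolding root_action_def root_node_def Let_def using v by simp
      have "restrict (?chi \<circ> sig V E v ?u3) (BV E v) = compose (BV E v) (a v) (transport V E ?u v (b ?u))"
      proof
        fix y
        show "restrict (?chi \<circ> sig V E v ?u3) (BV E v) y = compose (BV E v) (a v) (transport V E ?u v (b ?u)) y"
        proof (cases "y \<in> BV E v")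
          case False then show ?thesis by (simp add: compose_def)
        next
          case y: True
          have s1: "sig V E v ?u y \<in> BV E ?u" using sig_in[OF g v u(1) r1[symmetric] y] .
          have s3: "sig V E v ?u3 y \<in> BV E ?u3" using sig_in[OF g v u3(1) _ y] r1 r2 by simp
          have bu: "b ?u (sig V E v ?u y) = \<psi> (sig V E ?u ?u3 (sig V E v ?u y))"
            using bw_eq[OF u(1)] s1 by simp
          have sc: "sig V E ?u ?u3 (sig V E v ?u y) = sig V E v ?u3 y"
            using sig_comp[OF g v u(1) u3(1) r1[symmetric] r2[symmetric] y] .
          have zB: "\<psi> (sig V E v ?u3 y) \<in> BV E ?u" using mt_isom_in[OF iu3] s3 unfolding BV_def by blast
          have tr: "transport V E ?u v (b ?u) y = sig V E ?u v (\<psi> (sig V E v ?u3 y))"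
            unfolding transport_eq[OF g] using y bu sc by simp
          have s2: "sig V E ?u v (\<psi> (sig V E v ?u3 y)) \<in> BV E v" using sig_in[OF g u(1) v r1 zB] .
          have "a v (sig V E ?u v (\<psi> (sig V E v ?u3 y))) = \<phi> (sig V E v ?u (sig V E ?u v (\<psi> (sig V E v ?u3 y))))"
            using aw_eq[OF v] s2 by simp
          also have "sig V E v ?u (sig V E ?u v (\<psi> (sig V E v ?u3 y))) = sig V E ?u ?u (\<psi> (sig V E v ?u3 y))"
            using sig_comp[OF g u(1) v u(1) r1 r1[symmetric] zB] .
          also have "\<dots> = \<psi> (sig V E v ?u3 y)" using sig_id[OF g u(1) zB] .
          finally have c: "a v (sig V E ?u v (\<psi> (sig V E v ?u3 y))) = \<phi> (\<psi> (sig V E v ?u3 y))" .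
          have rhs_y: "a v (transport V E ?u v (b ?u) y) = \<phi> (\<psi> (sig V E v ?u3 y))" unfolding tr by (rule c)
          have "sig V E v ?u3 y \<in> mverts ?T" using BV_sub[OF g u3(1) s3] .
          then have "?chi (sig V E v ?u3 y) = \<phi> (\<psi> (sig V E v ?u3 y))" using chiv by blast
          then show ?thesis using y rhs_y by (simp add: compose_def)
        qed
      qed
      then show ?thesis using v inv3 ra by simp
    qed
  qed
  have lhs: "PsiM V E (\<phi> \<otimes>\<^bsub>aut_group ?T\<^esub> \<psi>) =
     ((\<lambda>w\<in>?R. restrict (?chi \<circ> sig V E w (inv_into ?N ?cc w)) (BV E w)), restrict ?chi ?N)"
    unfolding aut_mult PsiM_def by simp
  show ?thesis unfolding lhs rhs first by (simp only: second)
qed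

theorem main_iso: "aut_group (modtree V E) \<cong> semidirect_aut V E"
proof (rule is_isoI)
  show "PsiM V E \<in> iso (aut_group (modtree V E)) (semidirect_aut V E)"
  proof (rule isoI)
    show "PsiM V E \<in> hom (aut_group (modtree V E)) (semidirect_aut V E)"
      by (rule homI) (use Psi_in[OF g] Psi_hom in auto)
    show "bij_betw (PsiM V E) (carrier (aut_group (modtree V E))) (carrier (semidirect_aut V E))"
    proof (rule bij_betw_byWitness[where f' = "\<lambda>(a, p). PhiM V E a p"])
      show "\<forall>a\<in>carrier (aut_group (modtree V E)). (\<lambda>(a, p). PhiM V E a p) (PsiM V E a) = a"
        using Phi_Psi by (simp add: case_prod_beta)
      show "\<forall>a'\<in>carrier (semidirect_aut V E). PsiM V E ((\<lambda>(a, p). PhiM V E a p) a') = a'"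
        using Psi_Phi by auto
      show "PsiM V E ` carrier (aut_group (modtree V E)) \<subseteq> carrier (semidirect_aut V E)"
        using Psi_in[OF g] by blast
      show "(\<lambda>(a, p). PhiM V E a p) ` carrier (semidirect_aut V E) \<subseteq> carrier (aut_group (modtree V E))"
        using Phi_in[OF g] by auto
    qed
  qed
qed

end


theorem mainTheorem3:
  fixes V :: "'a set" and E :: "'a \<Rightarrow> 'a \<Rightarrow> bool"
  assumes "fin_graph V E"
  shows "aut_group (modtree V E) \<cong> semidirect_aut V E"
  using main_iso[OF assms] .

end
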